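(* Let $k\geq 3$ and let $b_1,\dots,b_k$ be free generators of $\Lambda=\mathbb F_k$. Then there is $C>0$ such that for every large enough prime $p$ with $p\equiv 1\pmod 3$ there exist an onto homomorphism $\rho_p:\Lambda\rightarrow G_p$ and a set $T_p\subset G_p$ satisfying $\frac{1}{243}\leq\frac{|T_p|}{|G_p|}\leq\frac13$ and $|T_p\rho_p(b_j)\triangle T_p|\leq \frac{C}{\sqrt p}|G_p|$ for every $1\leq j\leq k$. Moreover, these can be chosen so that for every $h\in\Lambda\setminus\{e\}$ we have $\rho_p(h)\neq e$ for every large enough $p$.
   Context: $F_q$ is the field with $q$ elements. For a prime $p\equiv1\pmod 3$: $H_p=\mathrm{PSL}_2(F_p)$ acts on $\mathrm{P}^1(F_p)=F_p\cup\{\infty\}$ by linear fractional transformations, hence on $F_3^{p+1}\cong F_3^{\mathrm{P}^1(F_p)}$ by permuting coordinates ($g\cdot x=(x_{g^{-1}\cdot i})_i$); $A_p=\{(x_i)\in F_3^{p+1}\mid\sum_i x_i=0\}$ is an $H_p$-invariant subspace and $G_p=A_p\rtimes H_p$. $\triangle$ denotes symmetric difference. *)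

theory Defs
  imports "HOL-Algebra.Algebra" "HOL-Number_Theory.Number_Theory" Complex_Main
begin

text \<open>Projective line P^1(F_p) is modelled as the integers {0..p}, the point p standing
  for infinity; F_p is modelled by residues {0..p-1}.\<close>

definition fdiv :: "int \<Rightarrow> int \<Rightarrow> int \<Rightarrow> int" where
  "fdiv p u v = (THE w. 0 \<le> w \<and> w < p \<and> [w * v = u] (mod p))"

definition mobius :: "int \<Rightarrow> int \<Rightarrow> int \<Rightarrow> int \<Rightarrow> int \<Rightarrow> int \<Rightarrow> int" where
  "mobius p a b c d z =
     (if z \<notin> {0..p} then z
      else if z = p then (if [c = 0] (mod p) then p else fdiv p a c)
      else if [c * z + d = 0] (mod p) then p
      else fdiv p (a * z + b) (c * z + d))"

text \<open>H_p = PSL_2(F_p) realised (faithfully) as its group of permutations of P^1(F_p).\<close>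
definition Hp :: "int \<Rightarrow> (int \<Rightarrow> int) set" where
  "Hp p = {mobius p a b c d | a b c d. [a * d - b * c = 1] (mod p)}"

text \<open>A_p: vectors in F_3^{P^1(F_p)} (entries in {0,1,2}) with coordinate sum 0.\<close>
definition Ap :: "int \<Rightarrow> (int \<Rightarrow> int) set" where
  "Ap p = {x. (\<forall>i\<in>{0..p}. x i \<in> {0,1,2}) \<and> (\<forall>i. i \<notin> {0..p} \<longrightarrow> x i = 0)
              \<and> (\<Sum>i\<in>{0..p}. x i) mod 3 = 0}"

definition pact :: "(int \<Rightarrow> int) \<Rightarrow> (int \<Rightarrow> int) \<Rightarrow> (int \<Rightarrow> int)" where
  "pact g x = (\<lambda>i. x (Hilbert_Choice.inv g i))"

type_synonym gelem = "(int \<Rightarrow> int) \<times> (int \<Rightarrow> int)"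

text \<open>G_p = A_p \<rtimes> H_p with (x,g)(y,h) = (x + g.y, g h).\<close>
definition Gp :: "int \<Rightarrow> gelem monoid" where
  "Gp p = \<lparr> carrier = {(x, g). x \<in> Ap p \<and> g \<in> Hp p},
           monoid.mult = (\<lambda>(x, g) (y, h). ((\<lambda>i. (x i + pact g y i) mod 3), g \<circ> h)),
           monoid.one = ((\<lambda>_. 0), id) \<rparr>"

text \<open>The free group F_k on b_1..b_k: elements are reduced words, letters (j, True) = b_j
  and (j, False) = b_j^{-1}; the empty word is e.\<close>
definition reduced_word :: "(nat \<times> bool) list \<Rightarrow> bool" where
  "reduced_word w = (\<forall>n. Suc n < length w \<longrightarrow>
      \<not> (fst (w ! n) = fst (w ! Suc n) \<and> snd (w ! n) \<noteq> snd (w ! Suc n)))"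

definition free_elems :: "nat \<Rightarrow> (nat \<times> bool) list set" where
  "free_elems k = {w. w \<in> lists ({1..k} \<times> UNIV) \<and> reduced_word w}"

definition word_eval :: "('a, 'b) monoid_scheme \<Rightarrow> (nat \<Rightarrow> 'a) \<Rightarrow> (nat \<times> bool) list \<Rightarrow> 'a" where
  "word_eval G g w = foldr (\<lambda>(j, s) acc. (if s then g j else inv\<^bsub>G\<^esub> (g j)) \<otimes>\<^bsub>G\<^esub> acc) w \<one>\<^bsub>G\<^esub>"

end

theory Submission
  imports Defs
begin

lemma prime_coprime_int:
  fixes p v :: int
  assumes "Factorial_Ring.prime p" "\<not> [v = 0] (mod p)"
  shows "coprime v p"
  using assms by (metis cong_0_iff coprime_commute prime_imp_coprime)

lemma cong_range_eq:
  fixes p w w' :: int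
  assumes "[w = w'] (mod p)" "0 \<le> w" "w < p" "0 \<le> w'" "w' < p"
  shows "w = w'"
  using assms by (simp add: cong_def)

lemma fdiv_exists:
  fixes p u v :: int
  assumes "Factorial_Ring.prime p" "\<not> [v = 0] (mod p)"
  shows "\<exists>w. 0 \<le> w \<and> w < p \<and> [w * v = u] (mod p)"
proof -
  have cp: "coprime v p" using prime_coprime_int assms by blast
  obtain i where i: "[v * i = 1] (mod p)" using cong_solve_coprime_int[OF cp] by blast
  have p0: "p > 0" using assms prime_gt_0_int by blast
  define w where "w = (u * i) mod p"
  have "[w * v = u * i * v] (mod p)" unfolding w_def by (simp add: cong_def mod_mult_left_eq)
  also have "u * i * v = u * (v * i)" by simp
  also have "[u * (v * i) = u * 1] (mod p)" using i cong_scalar_left by blast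
  finally have "[w * v = u] (mod p)" by simp
  moreover have "0 \<le> w" "w < p" unfolding w_def using p0 by auto
  ultimately show ?thesis by blast
qed

lemma fdiv_unique:
  fixes p u v w :: int
  assumes "Factorial_Ring.prime p" "\<not> [v = 0] (mod p)" "0 \<le> w" "w < p" "[w * v = u] (mod p)"
  shows "fdiv p u v = w"
  unfolding fdiv_def
proof (rule the_equality)
  show "0 \<le> w \<and> w < p \<and> [w * v = u] (mod p)" using assms by blast
  fix w' assume h: "0 \<le> w' \<and> w' < p \<and> [w' * v = u] (mod p)"
  have cp: "coprime v p" using prime_coprime_int assms by blast
  have "[w' * v = w * v] (mod p)" using h assms(5) by (meson cong_sym cong_trans)
  then have "[w' = w] (mod p)" using cong_mult_rcancel[OF cp] by blast
  then show "w' = w" using cong_range_eq h assms by blast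
qed

lemma fdiv_spec:
  fixes p u v :: int
  assumes "Factorial_Ring.prime p" "\<not> [v = 0] (mod p)"
  shows "0 \<le> fdiv p u v \<and> fdiv p u v < p \<and> [fdiv p u v * v = u] (mod p)"
  using fdiv_exists[OF assms, of u] fdiv_unique[OF assms] by metis

lemma fdiv_cong:
  fixes p u v u' v' :: int
  assumes "Factorial_Ring.prime p" "\<not> [v = 0] (mod p)" "[u = u'] (mod p)" "[v = v'] (mod p)"
  shows "fdiv p u v = fdiv p u' v'"
proof -
  have nv': "\<not> [v' = 0] (mod p)" using assms by (meson cong_sym cong_trans)
  have s: "0 \<le> fdiv p u v \<and> fdiv p u v < p \<and> [fdiv p u v * v = u] (mod p)"
    using fdiv_spec assms by blast
  have "[fdiv p u v * v' = u'] (mod p)"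
  proof -
    have "[fdiv p u v * v' = fdiv p u v * v] (mod p)" using assms(4) by (simp add: cong_mult cong_sym)
    then show ?thesis using s assms(3) by (meson cong_trans)
  qed
  then show ?thesis using fdiv_unique[OF assms(1) nv'] s by metis
qed


definition pt :: "int \<Rightarrow> int \<Rightarrow> int \<Rightarrow> int" where
  "pt p s t = (if [t = 0] (mod p) then p else fdiv p s t)"

definition rep :: "int \<Rightarrow> int \<Rightarrow> int \<times> int" where
  "rep p z = (if z = p then (1, 0) else (z, 1))"

definition nz :: "int \<Rightarrow> int \<Rightarrow> int \<Rightarrow> bool" where
  "nz p s t = (\<not> ([s = 0] (mod p) \<and> [t = 0] (mod p)))"

lemma pt_range:
  assumes "Factorial_Ring.prime p"
  shows "pt p s t \<in> {0..p}"
  using fdiv_spec[OF assms] prime_gt_0_int[OF assms] unfolding pt_def by (auto simp: less_imp_le)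

lemma pt_cong:
  assumes "Factorial_Ring.prime p" "[s = s'] (mod p)" "[t = t'] (mod p)"
  shows "pt p s t = pt p s' t'"
proof (cases "[t = 0] (mod p)")
  case True
  then have "[t' = 0] (mod p)" using assms by (meson cong_sym cong_trans)
  then show ?thesis using True by (simp add: pt_def)
next
  case False
  then have "\<not> [t' = 0] (mod p)" using assms by (meson cong_sym cong_trans)
  then show ?thesis using False fdiv_cong[OF assms(1) False assms(2,3)] by (simp add: pt_def)
qed

lemma prime_mult_nz:
  fixes p a b :: int
  assumes "Factorial_Ring.prime p" "\<not> [a = 0] (mod p)" "\<not> [b = 0] (mod p)"
  shows "\<not> [a * b = 0] (mod p)"
  using assms by (simp add: cong_0_iff prime_dvd_mult_iff)

lemma pt_scale:
  assumes "Factorial_Ring.prime p" "\<not> [m = 0] (mod p)" "nz p s t"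
  shows "pt p (m * s) (m * t) = pt p s t"
proof (cases "[t = 0] (mod p)")
  case True
  then have "[m * t = 0] (mod p)" using cong_scalar_left by fastforce
  then show ?thesis using True by (simp add: pt_def)
next
  case False
  then have F2: "\<not> [m * t = 0] (mod p)" using prime_mult_nz assms by blast
  have s: "0 \<le> fdiv p s t \<and> fdiv p s t < p \<and> [fdiv p s t * t = s] (mod p)"
    using fdiv_spec[OF assms(1) False] by blast
  have "[fdiv p s t * (m * t) = m * s] (mod p)"
  proof -
    have "fdiv p s t * (m * t) = m * (fdiv p s t * t)" by simp
    then show ?thesis using s cong_scalar_left by metis
  qed
  then have "fdiv p (m * s) (m * t) = fdiv p s t" using fdiv_unique[OF assms(1) F2] s by blast
  then show ?thesis using False F2 by (simp add: pt_def)
qed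

lemma pt_rep:
  assumes "Factorial_Ring.prime p" "nz p s t"
  shows "\<exists>m. \<not> [m = 0] (mod p) \<and> [s = m * fst (rep p (pt p s t))] (mod p)
           \<and> [t = m * snd (rep p (pt p s t))] (mod p)"
proof (cases "[t = 0] (mod p)")
  case True
  then have "pt p s t = p" by (simp add: pt_def)
  moreover have "\<not> [s = 0] (mod p)" using assms True by (simp add: nz_def)
  ultimately show ?thesis using True by (auto simp: rep_def)
next
  case False
  have s: "0 \<le> fdiv p s t \<and> fdiv p s t < p \<and> [fdiv p s t * t = s] (mod p)"
    using fdiv_spec[OF assms(1) False] by blast
  then have "pt p s t = fdiv p s t" "pt p s t \<noteq> p" using False by (auto simp: pt_def)
  then show ?thesis using False s
    by (intro exI[of _ t]) (auto simp: rep_def cong_sym mult.commute)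
qed

lemma pt_of_rep:
  assumes "Factorial_Ring.prime p" "z \<in> {0..p}"
  shows "pt p (fst (rep p z)) (snd (rep p z)) = z"
proof (cases "z = p")
  case True then show ?thesis by (simp add: rep_def pt_def)
next
  case False
  have p1: "p > 1" using assms prime_gt_1_int by blast
  then have n1: "\<not> [1 = 0] (mod p)" by (simp add: cong_0_iff zdvd_not_zless)
  have "fdiv p z 1 = z" using False assms by (intro fdiv_unique[OF assms(1) n1]) auto
  then show ?thesis using False n1 by (simp add: rep_def pt_def)
qed

lemma rep_nz:
  assumes "Factorial_Ring.prime p"
  shows "nz p (fst (rep p z)) (snd (rep p z))"
proof -
  have p1: "p > 1" using assms prime_gt_1_int by blast
  then have n1: "\<not> [1 = 0] (mod p)" by (simp add: cong_0_iff zdvd_not_zless)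
  then show ?thesis by (auto simp: rep_def nz_def)
qed

lemma mobius_rep:
  assumes "z \<in> {0..p}"
  shows "mobius p a b c d z = pt p (a * fst (rep p z) + b * snd (rep p z)) (c * fst (rep p z) + d * snd (rep p z))"
  using assms by (auto simp: mobius_def rep_def pt_def)

lemma det_nz:
  fixes p a b c d s t :: int
  assumes "Factorial_Ring.prime p" "[a * d - b * c = 1] (mod p)" "nz p s t"
  shows "nz p (a * s + b * t) (c * s + d * t)"
proof (rule ccontr)
  assume "\<not> ?thesis"
  then have X: "[a * s + b * t = 0] (mod p)" and Y: "[c * s + d * t = 0] (mod p)" by (auto simp: nz_def)
  have "[d * (a * s + b * t) - b * (c * s + d * t) = d * 0 - b * 0] (mod p)"
    by (intro cong_diff cong_scalar_left X Y)
  moreover have "d * (a * s + b * t) - b * (c * s + d * t) = (a * d - b * c) * s" by (simp add: algebra_simps)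
  ultimately have "[(a * d - b * c) * s = 0] (mod p)" by simp
  moreover have "[(a * d - b * c) * s = 1 * s] (mod p)" using assms(2) cong_scalar_right by blast
  ultimately have S: "[s = 0] (mod p)" by (metis cong_sym cong_trans mult_1)
  have "[a * (c * s + d * t) - c * (a * s + b * t) = a * 0 - c * 0] (mod p)"
    by (intro cong_diff cong_scalar_left X Y)
  moreover have "a * (c * s + d * t) - c * (a * s + b * t) = (a * d - b * c) * t" by (simp add: algebra_simps)
  ultimately have "[(a * d - b * c) * t = 0] (mod p)" by simp
  moreover have "[(a * d - b * c) * t = 1 * t] (mod p)" using assms(2) cong_scalar_right by blast
  ultimately have T: "[t = 0] (mod p)" by (metis cong_sym cong_trans mult_1)
  show False using S T assms(3) by (simp add: nz_def)
qed

lemma mobius_pt: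
  assumes "Factorial_Ring.prime p" "[a * d - b * c = 1] (mod p)" "nz p s t"
  shows "mobius p a b c d (pt p s t) = pt p (a * s + b * t) (c * s + d * t)"
proof -
  obtain m where m: "\<not> [m = 0] (mod p)" "[s = m * fst (rep p (pt p s t))] (mod p)"
           "[t = m * snd (rep p (pt p s t))] (mod p)" using pt_rep[OF assms(1,3)] by blast
  define r1 where "r1 = fst (rep p (pt p s t))"
  define r2 where "r2 = snd (rep p (pt p s t))"
  have nzr: "nz p (a * r1 + b * r2) (c * r1 + d * r2)"
    unfolding r1_def r2_def by (intro det_nz assms rep_nz)
  have "mobius p a b c d (pt p s t) = pt p (a * r1 + b * r2) (c * r1 + d * r2)"
    unfolding r1_def r2_def using mobius_rep pt_range[OF assms(1)] by blast
  also have "\<dots> = pt p (m * (a * r1 + b * r2)) (m * (c * r1 + d * r2))"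
    using pt_scale[OF assms(1) m(1) nzr] by simp
  also have "\<dots> = pt p (a * s + b * t) (c * s + d * t)"
  proof (rule pt_cong[OF assms(1)])
    have e1: "m * (a * r1 + b * r2) = a * (m * r1) + b * (m * r2)" by (simp add: algebra_simps)
    have e2: "m * (c * r1 + d * r2) = c * (m * r1) + d * (m * r2)" by (simp add: algebra_simps)
    show "[m * (a * r1 + b * r2) = a * s + b * t] (mod p)" unfolding e1
      using m unfolding r1_def r2_def by (intro cong_add cong_scalar_left) (auto simp: cong_sym)
    show "[m * (c * r1 + d * r2) = c * s + d * t] (mod p)" unfolding e2
      using m unfolding r1_def r2_def by (intro cong_add cong_scalar_left) (auto simp: cong_sym)
  qed
  finally show ?thesis .
qed

lemma mobius_comp:
  assumes "Factorial_Ring.prime p" "[a * d - b * c = 1] (mod p)" "[a' * d' - b' * c' = 1] (mod p)"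
  shows "mobius p a b c d \<circ> mobius p a' b' c' d' =
         mobius p (a * a' + b * c') (a * b' + b * d') (c * a' + d * c') (c * b' + d * d')"
proof
  fix z
  show "(mobius p a b c d \<circ> mobius p a' b' c' d') z =
         mobius p (a * a' + b * c') (a * b' + b * d') (c * a' + d * c') (c * b' + d * d') z"
  proof (cases "z \<in> {0..p}")
    case False then show ?thesis by (simp add: mobius_def)
  next
    case True
    define r1 where "r1 = fst (rep p z)"
    define r2 where "r2 = snd (rep p z)"
    have nz0: "nz p r1 r2" unfolding r1_def r2_def using rep_nz[OF assms(1)] .
    have nz1: "nz p (a' * r1 + b' * r2) (c' * r1 + d' * r2)" using det_nz[OF assms(1,3) nz0] .
    have "(mobius p a b c d \<circ> mobius p a' b' c' d') z
          = mobius p a b c d (pt p (a' * r1 + b' * r2) (c' * r1 + d' * r2))"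
      using mobius_rep[OF True] unfolding r1_def r2_def by simp
    also have "\<dots> = pt p (a * (a' * r1 + b' * r2) + b * (c' * r1 + d' * r2))
                        (c * (a' * r1 + b' * r2) + d * (c' * r1 + d' * r2))"
      using mobius_pt[OF assms(1,2) nz1] .
    also have "\<dots> = pt p ((a * a' + b * c') * r1 + (a * b' + b * d') * r2)
                        ((c * a' + d * c') * r1 + (c * b' + d * d') * r2)"
      by (simp add: algebra_simps)
    also have "\<dots> = mobius p (a * a' + b * c') (a * b' + b * d') (c * a' + d * c') (c * b' + d * d') z"
      using mobius_rep[OF True] unfolding r1_def r2_def by simp
    finally show ?thesis .
  qed
qed

lemma mobius_cong:
  assumes "Factorial_Ring.prime p" "[a = a'] (mod p)" "[b = b'] (mod p)" "[c = c'] (mod p)" "[d = d'] (mod p)"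
  shows "mobius p a b c d = mobius p a' b' c' d'"
proof
  fix z show "mobius p a b c d z = mobius p a' b' c' d' z"
  proof (cases "z \<in> {0..p}")
    case False then show ?thesis by (simp add: mobius_def)
  next
    case True
    show ?thesis unfolding mobius_rep[OF True]
      by (intro pt_cong[OF assms(1)] cong_add cong_scalar_right assms)
  qed
qed

lemma mobius_id:
  assumes "Factorial_Ring.prime p"
  shows "mobius p 1 0 0 1 = id"
proof
  fix z show "mobius p 1 0 0 1 z = id z"
  proof (cases "z \<in> {0..p}")
    case False then show ?thesis by (simp add: mobius_def)
  next
    case True
    show ?thesis unfolding mobius_rep[OF True] using pt_of_rep[OF assms True] by simp
  qed
qed


lemma det_prod:
  fixes a b c d a' b' c' d' :: int
  shows "(a * a' + b * c') * (c * b' + d * d') - (a * b' + b * d') * (c * a' + d * c')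
         = (a * d - b * c) * (a' * d' - b' * c')"
  by (simp add: algebra_simps)

lemma mobius_inv_comp:
  assumes "Factorial_Ring.prime p" "[a * d - b * c = 1] (mod p)"
  shows "mobius p d (-b) (-c) a \<circ> mobius p a b c d = id"
        "mobius p a b c d \<circ> mobius p d (-b) (-c) a = id"
proof -
  have d2: "[d * a - (-b) * (-c) = 1] (mod p)" using assms(2) by (simp add: mult.commute)
  have "mobius p d (-b) (-c) a \<circ> mobius p a b c d
        = mobius p (d * a + - b * c) (d * b + - b * d) (- c * a + a * c) (- c * b + a * d)"
    using mobius_comp[OF assms(1) d2 assms(2)] .
  also have "\<dots> = mobius p 1 0 0 1"
    by (rule mobius_cong[OF assms(1)]) (use assms(2) in \<open>auto simp: algebra_simps\<close>)
  finally show "mobius p d (-b) (-c) a \<circ> mobius p a b c d = id" using mobius_id[OF assms(1)] by simp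
  have "mobius p a b c d \<circ> mobius p d (-b) (-c) a
        = mobius p (a * d + b * - c) (a * - b + b * a) (c * d + d * - c) (c * - b + d * a)"
    using mobius_comp[OF assms(1) assms(2) d2] .
  also have "\<dots> = mobius p 1 0 0 1"
    by (rule mobius_cong[OF assms(1)]) (use assms(2) in \<open>auto simp: algebra_simps\<close>)
  finally show "mobius p a b c d \<circ> mobius p d (-b) (-c) a = id" using mobius_id[OF assms(1)] by simp
qed

lemma Hp_comp:
  assumes "Factorial_Ring.prime p" "g \<in> Hp p" "h \<in> Hp p"
  shows "g \<circ> h \<in> Hp p"
proof -
  obtain a b c d where g: "g = mobius p a b c d" "[a * d - b * c = 1] (mod p)"
    using assms(2) by (auto simp: Hp_def)
  obtain a' b' c' d' where h: "h = mobius p a' b' c' d'" "[a' * d' - b' * c' = 1] (mod p)"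
    using assms(3) by (auto simp: Hp_def)
  have "[(a * d - b * c) * (a' * d' - b' * c') = 1 * 1] (mod p)" using g h cong_mult by blast
  then have "[(a * a' + b * c') * (c * b' + d * d') - (a * b' + b * d') * (c * a' + d * c') = 1] (mod p)"
    unfolding det_prod by simp
  then show ?thesis unfolding g h mobius_comp[OF assms(1) g(2) h(2)] Hp_def by blast
qed

lemma Hp_id:
  assumes "Factorial_Ring.prime p"
  shows "id \<in> Hp p"
proof -
  have "mobius p 1 0 0 1 \<in> Hp p" unfolding Hp_def by force
  then show ?thesis using mobius_id[OF assms] by simp
qed

lemma mobius_in_Hp:
  "[a * d - b * c = 1] (mod p) \<Longrightarrow> mobius p a b c d \<in> Hp p"
  unfolding Hp_def by blast

lemma Hp_inv_ex:
  assumes "Factorial_Ring.prime p" "g \<in> Hp p"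
  shows "\<exists>g'\<in>Hp p. g' \<circ> g = id \<and> g \<circ> g' = id"
proof -
  obtain a b c d where g: "g = mobius p a b c d" "[a * d - b * c = 1] (mod p)"
    using assms(2) by (auto simp: Hp_def)
  have d2: "[d * a - (-b) * (-c) = 1] (mod p)" using g(2) by (simp add: mult.commute)
  show ?thesis using mobius_inv_comp[OF assms(1) g(2)] mobius_in_Hp[OF d2] g(1) by blast
qed

lemma Hp_inv:
  assumes "Factorial_Ring.prime p" "g \<in> Hp p"
  shows "Hilbert_Choice.inv g \<in> Hp p" "Hilbert_Choice.inv g \<circ> g = id" "g \<circ> Hilbert_Choice.inv g = id" "bij g"
proof -
  obtain g' where g': "g' \<in> Hp p" "g' \<circ> g = id" "g \<circ> g' = id" using Hp_inv_ex[OF assms] by blast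
  have "Hilbert_Choice.inv g = g'" using inv_unique_comp g' by blast
  then show "Hilbert_Choice.inv g \<in> Hp p" "Hilbert_Choice.inv g \<circ> g = id" "g \<circ> Hilbert_Choice.inv g = id" using g' by auto
  show "bij g" using g' o_bij by blast
qed

lemma Hp_range:
  assumes "Factorial_Ring.prime p" "g \<in> Hp p"
  shows "z \<in> {0..p} \<Longrightarrow> g z \<in> {0..p}" "z \<notin> {0..p} \<Longrightarrow> g z = z"
proof -
  obtain a b c d where g: "g = mobius p a b c d" using assms(2) by (auto simp: Hp_def)
  show "z \<in> {0..p} \<Longrightarrow> g z \<in> {0..p}" unfolding g using mobius_rep pt_range[OF assms(1)] by metis
  show "z \<notin> {0..p} \<Longrightarrow> g z = z" unfolding g by (simp add: mobius_def)
qed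

lemma Hp_bij_betw:
  assumes "Factorial_Ring.prime p" "g \<in> Hp p"
  shows "bij_betw g {0..p} {0..p}"
proof (rule bij_betw_byWitness[where f' = "Hilbert_Choice.inv g"])
  have i: "Hilbert_Choice.inv g \<in> Hp p" "Hilbert_Choice.inv g \<circ> g = id" "g \<circ> Hilbert_Choice.inv g = id" using Hp_inv[OF assms] by auto
  show "\<forall>a\<in>{0..p}. Hilbert_Choice.inv g (g a) = a" using i(2) by (metis comp_apply id_apply)
  show "\<forall>a\<in>{0..p}. g (Hilbert_Choice.inv g a) = a" using i(3) by (metis comp_apply id_apply)
  show "g ` {0..p} \<subseteq> {0..p}" using Hp_range[OF assms] by blast
  show "Hilbert_Choice.inv g ` {0..p} \<subseteq> {0..p}" using Hp_range[OF assms(1) i(1)] by blast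
qed


abbreviation hinv :: "(int \<Rightarrow> int) \<Rightarrow> int \<Rightarrow> int" where "hinv \<equiv> Hilbert_Choice.inv"

lemma Gp_mult: "(x, g) \<otimes>\<^bsub>Gp p\<^esub> (y, h) = ((\<lambda>i. (x i + pact g y i) mod 3), g \<circ> h)"
  by (simp add: Gp_def)

lemma Gp_one: "\<one>\<^bsub>Gp p\<^esub> = ((\<lambda>_. 0), id)"
  by (simp add: Gp_def)

lemma Gp_carrier: "carrier (Gp p) = Ap p \<times> Hp p"
  by (auto simp: Gp_def)

lemma Ap_mod: "x \<in> Ap p \<Longrightarrow> x i mod 3 = x i"
proof (cases "i \<in> {0..p}")
  case True
  assume "x \<in> Ap p"
  then have "x i \<in> {0,1,2}" using True unfolding Ap_def by blast
  then show ?thesis by auto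
next
  case False
  assume "x \<in> Ap p"
  then have "x i = 0" using False unfolding Ap_def by blast
  then show ?thesis by auto
qed

lemma Ap_mod_fun: "x \<in> Ap p \<Longrightarrow> (\<lambda>i. x i mod 3) = x"
  using Ap_mod by blast

lemma Ap_I:
  assumes "\<And>i. i \<in> {0..p} \<Longrightarrow> x i \<in> {0,1,2}" "\<And>i. i \<notin> {0..p} \<Longrightarrow> x i = 0"
    "(\<Sum>i\<in>{0..p}. x i) mod 3 = 0"
  shows "x \<in> Ap p"
  using assms unfolding Ap_def by blast

lemma mod3_vals: "(v::int) mod 3 \<in> {0,1,2}"
proof -
  have "0 \<le> v mod 3" "v mod 3 < 3" by auto
  then show ?thesis by auto
qed

lemma add_Ap:
  assumes "x \<in> Ap p" "y \<in> Ap p"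
  shows "(\<lambda>i. (x i + y i) mod 3) \<in> Ap p"
proof (rule Ap_I)
  show "\<And>i. (x i + y i) mod 3 \<in> {0, 1, 2}" using mod3_vals by blast
  show "\<And>i. i \<notin> {0..p} \<Longrightarrow> (x i + y i) mod 3 = 0" using assms unfolding Ap_def by auto
  have "(\<Sum>i\<in>{0..p}. (x i + y i) mod 3) mod 3 = (\<Sum>i\<in>{0..p}. x i + y i) mod 3"
    by (rule mod_sum_eq)
  also have "\<dots> = ((\<Sum>i\<in>{0..p}. x i) + (\<Sum>i\<in>{0..p}. y i)) mod 3" by (simp add: sum.distrib)
  also have "\<dots> = ((\<Sum>i\<in>{0..p}. x i) mod 3 + (\<Sum>i\<in>{0..p}. y i) mod 3) mod 3" by (simp add: mod_add_eq)
  also have "\<dots> = 0" using assms unfolding Ap_def by simp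
  finally show "(\<Sum>i\<in>{0..p}. (x i + y i) mod 3) mod 3 = 0" .
qed

lemma neg_Ap:
  assumes "x \<in> Ap p"
  shows "(\<lambda>i. (- x i) mod 3) \<in> Ap p"
proof (rule Ap_I)
  show "\<And>i. (- x i) mod 3 \<in> {0, 1, 2}" using mod3_vals by blast
  show "\<And>i. i \<notin> {0..p} \<Longrightarrow> (- x i) mod 3 = 0" using assms unfolding Ap_def by auto
  have "(\<Sum>i\<in>{0..p}. (- x i) mod 3) mod 3 = (\<Sum>i\<in>{0..p}. - x i) mod 3"
    by (rule mod_sum_eq)
  also have "\<dots> = (- (\<Sum>i\<in>{0..p}. x i)) mod 3" by (simp add: sum_negf)
  also have "\<dots> = (- ((\<Sum>i\<in>{0..p}. x i) mod 3)) mod 3" by (simp add: mod_minus_eq)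
  also have "\<dots> = 0" using assms unfolding Ap_def by simp
  finally show "(\<Sum>i\<in>{0..p}. (- x i) mod 3) mod 3 = 0" .
qed

lemma pact_Ap:
  assumes "Factorial_Ring.prime p" "g \<in> Hp p" "y \<in> Ap p"
  shows "pact g y \<in> Ap p"
proof -
  have ig: "hinv g \<in> Hp p" using Hp_inv[OF assms(1,2)] by blast
  have bb: "bij_betw (hinv g) {0..p} {0..p}" using Hp_bij_betw[OF assms(1) ig] .
  show ?thesis
  proof (rule Ap_I)
    fix i assume "i \<in> {0..p}"
    then have "hinv g i \<in> {0..p}" using Hp_range[OF assms(1) ig] by blast
    then show "pact g y i \<in> {0, 1, 2}" using assms(3) unfolding Ap_def pact_def by blast
  next
    fix i assume "i \<notin> {0..p}"
    then have "hinv g i = i" using Hp_range[OF assms(1) ig] by blast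
    then show "pact g y i = 0" using assms(3) \<open>i \<notin> {0..p}\<close> unfolding Ap_def pact_def by auto
  next
    have "(\<Sum>i\<in>{0..p}. pact g y i) = (\<Sum>i\<in>{0..p}. y i)"
      unfolding pact_def using sum.reindex_bij_betw[OF bb, of y] .
    then show "(\<Sum>i\<in>{0..p}. pact g y i) mod 3 = 0" using assms(3) unfolding Ap_def by simp
  qed
qed

lemma zero_Ap: "(\<lambda>_. 0) \<in> Ap p"
  unfolding Ap_def by auto

lemma pact_zero: "pact g (\<lambda>_. 0) = (\<lambda>_. 0)"
  by (simp add: pact_def)

lemma pact_id: "pact id y = y"
  by (simp add: pact_def inv_id)

lemma Gp_group:
  assumes pr: "Factorial_Ring.prime p"
  shows "group (Gp p)"
proof (rule groupI)
  fix u v assume u: "u \<in> carrier (Gp p)" and v: "v \<in> carrier (Gp p)"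
  obtain x g where xg: "u = (x, g)" "x \<in> Ap p" "g \<in> Hp p" using u by (auto simp: Gp_carrier)
  obtain y h where yh: "v = (y, h)" "y \<in> Ap p" "h \<in> Hp p" using v by (auto simp: Gp_carrier)
  show "u \<otimes>\<^bsub>Gp p\<^esub> v \<in> carrier (Gp p)"
    unfolding xg yh Gp_mult Gp_carrier
    using add_Ap[OF xg(2) pact_Ap[OF pr xg(3) yh(2)]] Hp_comp[OF pr xg(3) yh(3)] by blast
next
  show "\<one>\<^bsub>Gp p\<^esub> \<in> carrier (Gp p)" unfolding Gp_one Gp_carrier using zero_Ap Hp_id[OF pr] by blast
next
  fix u v w assume u: "u \<in> carrier (Gp p)" and v: "v \<in> carrier (Gp p)" and w: "w \<in> carrier (Gp p)"
  obtain x g where xg: "u = (x, g)" "x \<in> Ap p" "g \<in> Hp p" using u by (auto simp: Gp_carrier)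
  obtain y h where yh: "v = (y, h)" "y \<in> Ap p" "h \<in> Hp p" using v by (auto simp: Gp_carrier)
  obtain z l where zl: "w = (z, l)" "z \<in> Ap p" "l \<in> Hp p" using w by (auto simp: Gp_carrier)
  have bg: "bij g" and bh: "bij h" using Hp_inv[OF pr xg(3)] Hp_inv[OF pr yh(3)] by auto
  have ic: "hinv (g \<circ> h) = hinv h \<circ> hinv g" using o_inv_distrib[OF bg bh] .
  show "u \<otimes>\<^bsub>Gp p\<^esub> v \<otimes>\<^bsub>Gp p\<^esub> w = u \<otimes>\<^bsub>Gp p\<^esub> (v \<otimes>\<^bsub>Gp p\<^esub> w)"
    unfolding xg yh zl Gp_mult
    by (simp add: pact_def ic comp_assoc mod_simps add.assoc)
next
  fix u assume u: "u \<in> carrier (Gp p)"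
  obtain x g where xg: "u = (x, g)" "x \<in> Ap p" "g \<in> Hp p" using u by (auto simp: Gp_carrier)
  show "\<one>\<^bsub>Gp p\<^esub> \<otimes>\<^bsub>Gp p\<^esub> u = u"
    unfolding xg Gp_one Gp_mult pact_id using Ap_mod_fun[OF xg(2)] by simp
next
  fix u assume u: "u \<in> carrier (Gp p)"
  obtain x g where xg: "u = (x, g)" "x \<in> Ap p" "g \<in> Hp p" using u by (auto simp: Gp_carrier)
  have ig: "hinv g \<in> Hp p" "hinv g \<circ> g = id" using Hp_inv[OF pr xg(3)] by auto
  define yv where "yv = (\<lambda>i. (- pact (hinv g) x i) mod 3)"
  have yA: "yv \<in> Ap p" unfolding yv_def using neg_Ap[OF pact_Ap[OF pr ig(1) xg(2)]] .
  have "(yv, hinv g) \<otimes>\<^bsub>Gp p\<^esub> u = \<one>\<^bsub>Gp p\<^esub>"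
    unfolding xg Gp_mult Gp_one ig(2) yv_def by (simp add: mod_simps)
  then show "\<exists>y\<in>carrier (Gp p). y \<otimes>\<^bsub>Gp p\<^esub> u = \<one>\<^bsub>Gp p\<^esub>"
    using yA ig(1) by (auto simp: Gp_carrier)
qed


type_synonym mat = "int \<times> int \<times> int \<times> int"

fun mmul :: "mat \<Rightarrow> mat \<Rightarrow> mat" where
  "mmul (a, b, c, d) (a', b', c', d') = (a * a' + b * c', a * b' + b * d', c * a' + d * c', c * b' + d * d')"

fun mdet :: "mat \<Rightarrow> int" where
  "mdet (a, b, c, d) = a * d - b * c"

fun mob :: "int \<Rightarrow> mat \<Rightarrow> int \<Rightarrow> int" where
  "mob p (a, b, c, d) = mobius p a b c d"

definition Mgen :: "nat \<Rightarrow> nat \<Rightarrow> mat" where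
  "Mgen k j = (if j = 1 then (1, 4 * int k, 0, 1)
               else (1 + 4 * (int j - 1), - 8 * (int j - 1)^2, 2, 1 - 4 * (int j - 1)))"

definition Minv :: "nat \<Rightarrow> nat \<Rightarrow> mat" where
  "Minv k j = (if j = 1 then (1, - 4 * int k, 0, 1)
               else (1 - 4 * (int j - 1), 8 * (int j - 1)^2, - 2, 1 + 4 * (int j - 1)))"

fun wm :: "nat \<Rightarrow> (nat \<times> bool) list \<Rightarrow> mat" where
  "wm k [] = (1, 0, 0, 1)"
| "wm k ((j, s) # w) = mmul (if s then Mgen k j else Minv k j) (wm k w)"

lemma mdet_mmul: "mdet (mmul A B) = mdet A * mdet B"
  by (cases A; cases B) (simp add: algebra_simps)

lemma mdet_Mgen: "mdet (Mgen k j) = 1"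
  by (simp add: Mgen_def power2_eq_square algebra_simps)

lemma mdet_Minv: "mdet (Minv k j) = 1"
  by (simp add: Minv_def power2_eq_square algebra_simps)

lemma mdet_wm: "mdet (wm k w) = 1"
  by (induction w rule: wm.induct) (simp_all add: mdet_mmul mdet_Mgen mdet_Minv)

lemma mob_mmul:
  assumes "Factorial_Ring.prime p" "mdet A = 1" "mdet B = 1"
  shows "mob p (mmul A B) = mob p A \<circ> mob p B"
proof -
  obtain a b c d where A: "A = (a, b, c, d)" by (cases A) auto
  obtain a' b' c' d' where B: "B = (a', b', c', d')" by (cases B) auto
  show ?thesis using assms mobius_comp[OF assms(1), of a d b c a' d' b' c'] unfolding A B by simp
qed

lemma mob_in_Hp: "mdet A = 1 \<Longrightarrow> mob p A \<in> Hp p"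
  by (cases A) (auto intro: mobius_in_Hp)

lemma Mgen_Minv:
  assumes "Factorial_Ring.prime p"
  shows "mob p (Minv k j) \<circ> mob p (Mgen k j) = id"
proof -
  have "mmul (Minv k j) (Mgen k j) = (1, 0, 0, 1)"
    by (simp add: Mgen_def Minv_def power2_eq_square algebra_simps)
  then show ?thesis using mob_mmul[OF assms mdet_Minv[of k j] mdet_Mgen[of k j]] mobius_id[OF assms] by simp
qed

lemma Mgen_Minv2:
  assumes "Factorial_Ring.prime p"
  shows "mob p (Mgen k j) \<circ> mob p (Minv k j) = id"
proof -
  have "mmul (Mgen k j) (Minv k j) = (1, 0, 0, 1)"
    by (simp add: Mgen_def Minv_def power2_eq_square algebra_simps)
  then show ?thesis using mob_mmul[OF assms mdet_Mgen[of k j] mdet_Minv[of k j]] mobius_id[OF assms] by simp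
qed

definition yv :: "int \<Rightarrow> int \<Rightarrow> int" where
  "yv p = (\<lambda>i. if i = p then 1 else if i = 0 then 2 else 0)"

definition gen :: "nat \<Rightarrow> int \<Rightarrow> nat \<Rightarrow> gelem" where
  "gen k p j = (if j = 3 then yv p else (\<lambda>_. 0), mob p (Mgen k j))"

lemma yv_Ap:
  assumes "Factorial_Ring.prime p"
  shows "yv p \<in> Ap p"
proof -
  have p1: "p > 1" using assms prime_gt_1_int by blast
  have "(\<Sum>i\<in>{0..p}. yv p i) = (\<Sum>i\<in>{0,p}. yv p i)"
    by (rule sum.mono_neutral_right) (use p1 in \<open>auto simp: yv_def\<close>)
  also have "\<dots> = 3" using p1 by (simp add: yv_def)
  finally show ?thesis unfolding Ap_def yv_def using p1 by (auto simp: less_imp_le)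
qed

lemma gen_carrier:
  assumes "Factorial_Ring.prime p"
  shows "gen k p j \<in> carrier (Gp p)"
  unfolding gen_def Gp_carrier using yv_Ap[OF assms] zero_Ap mob_in_Hp[OF mdet_Mgen] by auto

lemma snd_mult: "snd (u \<otimes>\<^bsub>Gp p\<^esub> v) = snd u \<circ> snd v"
  by (cases u; cases v) (simp add: Gp_mult)

lemma snd_inv_gen:
  assumes pr: "Factorial_Ring.prime p"
  shows "snd (inv\<^bsub>Gp p\<^esub> (gen k p j)) = mob p (Minv k j)"
proof -
  interpret G: group "Gp p" using Gp_group[OF pr] .
  have gc: "gen k p j \<in> carrier (Gp p)" using gen_carrier[OF pr] .
  have "inv\<^bsub>Gp p\<^esub> (gen k p j) \<otimes>\<^bsub>Gp p\<^esub> gen k p j = \<one>\<^bsub>Gp p\<^esub>" using G.l_inv[OF gc] .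
  then have e: "snd (inv\<^bsub>Gp p\<^esub> (gen k p j)) \<circ> mob p (Mgen k j) = id"
    by (metis snd_mult Gp_one gen_def snd_conv)
  have "snd (inv\<^bsub>Gp p\<^esub> (gen k p j)) = snd (inv\<^bsub>Gp p\<^esub> (gen k p j)) \<circ> (mob p (Mgen k j) \<circ> mob p (Minv k j))"
    using Mgen_Minv2[OF pr] by simp
  also have "\<dots> = mob p (Minv k j)" using e by (simp add: comp_assoc[symmetric])
  finally show ?thesis .
qed

lemma word_eval_snd:
  assumes pr: "Factorial_Ring.prime p"
  shows "word_eval (Gp p) (gen k p) w \<in> carrier (Gp p) \<and> snd (word_eval (Gp p) (gen k p) w) = mob p (wm k w)"
proof (induction w)
  case Nil
  then show ?case using Gp_group[OF pr] mobius_id[OF pr] zero_Ap Hp_id[OF pr]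
    by (simp add: word_eval_def Gp_one Gp_carrier)
next
  case (Cons l w)
  interpret G: group "Gp p" using Gp_group[OF pr] .
  obtain j s where l: "l = (j, s)" by (cases l) auto
  have we: "word_eval (Gp p) (gen k p) (l # w) =
      (if s then gen k p j else inv\<^bsub>Gp p\<^esub> (gen k p j)) \<otimes>\<^bsub>Gp p\<^esub> word_eval (Gp p) (gen k p) w"
    unfolding l word_eval_def by simp
  have gc: "gen k p j \<in> carrier (Gp p)" using gen_carrier[OF pr] .
  have c1: "(if s then gen k p j else inv\<^bsub>Gp p\<^esub> (gen k p j)) \<in> carrier (Gp p)" using gc by auto
  have s1: "snd (if s then gen k p j else inv\<^bsub>Gp p\<^esub> (gen k p j)) = mob p (if s then Mgen k j else Minv k j)"
    using snd_inv_gen[OF pr] by (simp add: gen_def)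
  have dd: "mdet (if s then Mgen k j else Minv k j) = 1" using mdet_Mgen mdet_Minv by simp
  show ?case unfolding we
    using Cons c1 s1 snd_mult mob_mmul[OF pr dd mdet_wm] by (simp add: l)
qed


definition reg :: "nat \<Rightarrow> nat \<times> bool \<Rightarrow> real \<Rightarrow> bool" where
  "reg k l x = (if fst l = 1 then (if snd l then x > 2 * real k else x < - 2 * real k)
     else (if snd l then 0 < x - 2 * (real (fst l) - 1) \<and> x - 2 * (real (fst l) - 1) < 1
           else -1 < x - 2 * (real (fst l) - 1) \<and> x - 2 * (real (fst l) - 1) < 0))"

definition prevc :: "nat \<Rightarrow> nat \<times> bool \<Rightarrow> real \<Rightarrow> bool" where
  "prevc k l x = (x = 0 \<or> (\<exists>j' s'. j' \<in> {1..k} \<and> (j', s') \<noteq> (fst l, \<not> snd l) \<and> reg k (j', s') x))"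

lemma reg_range:
  assumes "j \<in> {1..k}" "j \<noteq> 1" "reg k (j, s) x"
  shows "2 * (real j - 1) - 1 < x \<and> x < 2 * (real j - 1) + 1"
  using assms by (auto simp: reg_def split: if_splits)

lemma reg_nonzero:
  assumes "j \<in> {1..k}" "reg k (j, s) x"
  shows "x \<noteq> 0"
proof -
  have "j \<ge> 1" using assms by auto
  then have "real j - 1 \<ge> 0" by simp
  then show ?thesis using assms(2) by (auto simp: reg_def split: if_splits)
qed

lemma step1:
  assumes "1 \<in> {1..k}" "prevc k (1, s) x"
  shows "reg k (1, s) (if s then x + 4 * real k else x - 4 * real k)"
proof -
  have A: "x > - 2 * real k" if "s" 
  proof -
    from assms(2) consider "x = 0" | j' s' where "j' \<in> {1..k}" "(j', s') \<noteq> (1, \<not> s)" "reg k (j', s') x"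
      unfolding prevc_def by auto
    then show ?thesis
    proof cases
      case 1 then show ?thesis using assms(1) by auto
    next
      case 2
      show ?thesis
      proof (cases "j' = 1")
        case True then show ?thesis using 2 that by (auto simp: reg_def)
      next
        case False
        have "real j' \<ge> 1" "real k \<ge> 1" using 2 assms(1) by auto
        then show ?thesis using reg_range[OF 2(1) False 2(3)] by simp
      qed
    qed
  qed
  have B: "x < 2 * real k" if "\<not> s" 
  proof -
    from assms(2) consider "x = 0" | j' s' where "j' \<in> {1..k}" "(j', s') \<noteq> (1, \<not> s)" "reg k (j', s') x"
      unfolding prevc_def by auto
    then show ?thesis
    proof cases
      case 1 then show ?thesis using assms(1) by auto
    next
      case 2
      show ?thesis
      proof (cases "j' = 1")
        case True then show ?thesis using 2 that by (auto simp: reg_def)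
      next
        case False
        have "real j' \<le> real k" using 2 by auto
        then show ?thesis using reg_range[OF 2(1) False 2(3)] by simp
      qed
    qed
  qed
  show ?thesis using A B by (auto simp: reg_def)
qed

lemma stepu:
  assumes "j \<in> {1..k}" "j \<noteq> 1" "prevc k (j, s) x"
  shows "(if s then (0 < x - 2 * (real j - 1) \<and> x - 2 * (real j - 1) < 1)
          else (-1 < x - 2 * (real j - 1) \<and> x - 2 * (real j - 1) < 0))
         \<or> x - 2 * (real j - 1) > 1 \<or> x - 2 * (real j - 1) < -1"
proof -
  have j2: "real j \<ge> 2" "real j \<le> real k" using assms by auto
  from assms(3) consider "x = 0" | j' s' where "j' \<in> {1..k}" "(j', s') \<noteq> (j, \<not> s)" "reg k (j', s') x"
    unfolding prevc_def by auto
  then show ?thesis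
  proof cases
    case 1 then show ?thesis using j2 by auto
  next
    case 2
    show ?thesis
    proof (cases "j' = 1")
      case True then show ?thesis using 2 j2 by (auto simp: reg_def split: if_splits)
    next
      case False
      have r: "2 * (real j' - 1) - 1 < x \<and> x < 2 * (real j' - 1) + 1" using reg_range[OF 2(1) False 2(3)] .
      show ?thesis
      proof (cases "j' = j")
        case True
        then have "s' = s" using 2 by auto
        then show ?thesis using 2 True False by (auto simp: reg_def)
      next
        case False
        then consider "j' < j" | "j' > j" by linarith
        then show ?thesis
        proof cases
          case 1 then have "real j' + 1 \<le> real j" by simp
          then show ?thesis using r by auto
        next
          case 2 then have "real j + 1 \<le> real j'" by simp
          then show ?thesis using r by auto
        qed
      qed
    qed
  qed
qed

lemma frac_pos:
  fixes u :: real
  assumes "(0 < u \<and> u < 1) \<or> u > 1 \<or> u < -1"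
  shows "2 * u + 1 \<noteq> 0 \<and> 0 < u / (2 * u + 1) \<and> u / (2 * u + 1) < 1"
proof -
  consider "0 < u" | "u < -1" using assms by linarith
  then show ?thesis
  proof cases
    case 1
    then show ?thesis by (simp add: divide_less_eq)
  next
    case 2
    then have n: "2 * u + 1 < 0" by simp
    then show ?thesis using 2 by (simp add: divide_less_eq zero_less_divide_iff)
  qed
qed

lemma frac_neg:
  fixes u :: real
  assumes "(-1 < u \<and> u < 0) \<or> u > 1 \<or> u < -1"
  shows "1 - 2 * u \<noteq> 0 \<and> -1 < u / (1 - 2 * u) \<and> u / (1 - 2 * u) < 0"
proof -
  consider "u < 0" | "u > 1" using assms by linarith
  then show ?thesis
  proof cases
    case 1
    then have "1 - 2 * u > 0" by simp
    then show ?thesis using 1 by (simp add: less_divide_eq divide_less_0_iff)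
  next
    case 2
    then have n: "1 - 2 * u < 0" by simp
    then show ?thesis using 2 by (simp add: less_divide_eq divide_less_0_iff)
  qed
qed


lemma frac_aux:
  fixes a B C u :: real
  assumes "a \<noteq> 0" "B \<noteq> 0"
  shows "a * (B * C + u) / (a * B) - C = u / B"
  using assms by (simp add: field_simps)

lemma stepvec:
  fixes b0 d0 :: int
  assumes jk: "j \<in> {1..k}" and d0: "d0 \<noteq> 0" and pv: "prevc k (j, s) (real_of_int b0 / real_of_int d0)"
    and M: "(if s then Mgen k j else Minv k j) = (m1, m2, m3, m4)"
  shows "m3 * b0 + m4 * d0 \<noteq> 0 \<and> reg k (j, s) (real_of_int (m1 * b0 + m2 * d0) / real_of_int (m3 * b0 + m4 * d0))"
proof -
  define x where "x = real_of_int b0 / real_of_int d0"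
  have bx: "real_of_int b0 = x * real_of_int d0" using d0 unfolding x_def by (simp add: field_simps)
  have d0r: "real_of_int d0 \<noteq> 0" using d0 by simp
  show ?thesis
  proof (cases "j = 1")
    case True
    have mm: "m1 = 1" "m2 = (if s then 4 * int k else - 4 * int k)" "m3 = 0" "m4 = 1"
      using M True by (auto simp: Mgen_def Minv_def split: if_splits)
    have "real_of_int (m1 * b0 + m2 * d0) / real_of_int (m3 * b0 + m4 * d0)
          = (if s then x + 4 * real k else x - 4 * real k)"
      unfolding mm using d0r bx by (auto simp: field_simps)
    then show ?thesis using step1[of k s x] pv jk True d0 unfolding x_def mm by auto
  next
    case False
    define c where "c = real j - 1"
    define u where "u = x - 2 * c"
    have ci: "real_of_int (int j - 1) = c" unfolding c_def by simp
    have uu: "(if s then (0 < u \<and> u < 1) else (-1 < u \<and> u < 0)) \<or> u > 1 \<or> u < -1"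
      using stepu[OF jk False pv[folded x_def]] unfolding u_def c_def .
    show ?thesis
    proof (cases s)
      case True
      have mm: "m1 = 1 + 4 * (int j - 1)" "m2 = - 8 * (int j - 1)^2" "m3 = 2" "m4 = 1 - 4 * (int j - 1)"
        using M True False by (auto simp: Mgen_def)
      have f: "2 * u + 1 \<noteq> 0 \<and> 0 < u / (2 * u + 1) \<and> u / (2 * u + 1) < 1"
        using frac_pos uu True by auto
      have ed: "real_of_int (m3 * b0 + m4 * d0) = real_of_int d0 * (2 * u + 1)"
        unfolding mm u_def c_def using bx by (simp add: algebra_simps)
      have eb: "real_of_int (m1 * b0 + m2 * d0) = real_of_int d0 * ((2 * u + 1) * (2 * c) + u)"
        unfolding mm u_def c_def using bx by (simp add: algebra_simps power2_eq_square)
      have nz: "real_of_int (m3 * b0 + m4 * d0) \<noteq> 0" using ed f d0r by simp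
      have q: "real_of_int (m1 * b0 + m2 * d0) / real_of_int (m3 * b0 + m4 * d0) - 2 * c = u / (2 * u + 1)"
        unfolding ed eb using frac_aux[of "real_of_int d0"] f d0r by presburger
      have nzi: "m3 * b0 + m4 * d0 \<noteq> 0" using nz by (metis of_int_0)
      show ?thesis using nzi q f False True unfolding reg_def c_def by auto
    next
      case sF: False
      have mm: "m1 = 1 - 4 * (int j - 1)" "m2 = 8 * (int j - 1)^2" "m3 = - 2" "m4 = 1 + 4 * (int j - 1)"
        using M sF False by (auto simp: Minv_def)
      have f: "1 - 2 * u \<noteq> 0 \<and> -1 < u / (1 - 2 * u) \<and> u / (1 - 2 * u) < 0"
        using frac_neg uu sF by auto
      have ed: "real_of_int (m3 * b0 + m4 * d0) = real_of_int d0 * (1 - 2 * u)"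
        unfolding mm u_def c_def using bx by (simp add: algebra_simps)
      have eb: "real_of_int (m1 * b0 + m2 * d0) = real_of_int d0 * ((1 - 2 * u) * (2 * c) + u)"
        unfolding mm u_def c_def using bx by (simp add: algebra_simps power2_eq_square)
      have nz: "real_of_int (m3 * b0 + m4 * d0) \<noteq> 0" using ed f d0r by simp
      have q: "real_of_int (m1 * b0 + m2 * d0) / real_of_int (m3 * b0 + m4 * d0) - 2 * c = u / (1 - 2 * u)"
        unfolding ed eb using frac_aux[of "real_of_int d0"] f d0r by presburger
      have nzi: "m3 * b0 + m4 * d0 \<noteq> 0" using nz by (metis of_int_0)
      show ?thesis using nzi q f False sF unfolding reg_def c_def by auto
    qed
  qed
qed


lemma reduced_tail: "reduced_word (l # w) \<Longrightarrow> reduced_word w"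
  unfolding reduced_word_def
proof (intro allI impI)
  fix n assume h: "\<forall>n. Suc n < length (l # w) \<longrightarrow>
      \<not> (fst ((l # w) ! n) = fst ((l # w) ! Suc n) \<and> snd ((l # w) ! n) \<noteq> snd ((l # w) ! Suc n))"
    and n: "Suc n < length w"
  show "\<not> (fst (w ! n) = fst (w ! Suc n) \<and> snd (w ! n) \<noteq> snd (w ! Suc n))"
    using h[rule_format, of "Suc n"] n by simp
qed

lemma reduced_head: "reduced_word (l # l' # w) \<Longrightarrow> fst l = fst l' \<Longrightarrow> snd l = snd l'"
  unfolding reduced_word_def by (metis length_Cons nth_Cons_0 nth_Cons_Suc zero_less_Suc Suc_less_eq)

lemma pingpong:
  assumes "\<forall>l\<in>set w. fst l \<in> {1..k}" "reduced_word w" "w \<noteq> []"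
  shows "snd (snd (snd (wm k w))) \<noteq> 0 \<and>
         reg k (hd w) (real_of_int (fst (snd (wm k w))) / real_of_int (snd (snd (snd (wm k w)))))"
  using assms
proof (induction w)
  case Nil then show ?case by simp
next
  case (Cons l w)
  obtain j s where l: "l = (j, s)" by (cases l) auto
  obtain a0 b0 c0 d0 where W: "wm k w = (a0, b0, c0, d0)" by (cases "wm k w") auto
  obtain m1 m2 m3 m4 where M: "(if s then Mgen k j else Minv k j) = (m1, m2, m3, m4)"
    by (cases "(if s then Mgen k j else Minv k j)") auto
  have jk: "j \<in> {1..k}" using Cons.prems unfolding l by auto
  have pre: "d0 \<noteq> 0 \<and> prevc k (j, s) (real_of_int b0 / real_of_int d0)"
  proof (cases "w = []")
    case True
    then have "b0 = 0" "d0 = 1" using W by auto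
    then show ?thesis by (simp add: prevc_def)
  next
    case False
    have IH: "d0 \<noteq> 0 \<and> reg k (hd w) (real_of_int b0 / real_of_int d0)"
      using Cons.IH[OF _ reduced_tail[OF Cons.prems(2)] False] Cons.prems(1) W by auto
    obtain j' s' w' where w: "w = (j', s') # w'" using False by (metis list.exhaust prod.exhaust)
    have j'k: "j' \<in> {1..k}" using Cons.prems(1) w by auto
    have "(j', s') \<noteq> (j, \<not> s)"
      using reduced_head[of l "(j', s')" w'] Cons.prems(2) unfolding l w by auto
    then show ?thesis using IH j'k unfolding prevc_def w by auto
  qed
  have st: "m3 * b0 + m4 * d0 \<noteq> 0 \<and>
      reg k (j, s) (real_of_int (m1 * b0 + m2 * d0) / real_of_int (m3 * b0 + m4 * d0))"
    using stepvec[OF jk _ _ M] pre by blast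
  have "wm k (l # w) = mmul (m1, m2, m3, m4) (a0, b0, c0, d0)" using M W l by simp
  then show ?case using st l by simp
qed

lemma word_b_nonzero:
  assumes "\<forall>l\<in>set w. fst l \<in> {1..k}" "reduced_word w" "w \<noteq> []"
  shows "fst (snd (wm k w)) \<noteq> 0"
proof -
  obtain j s where hw: "hd w = (j, s)" by (cases "hd w") auto
  have h: "j \<in> {1..k}" using assms(1,3) hw by (cases w) auto
  have "real_of_int (fst (snd (wm k w))) / real_of_int (snd (snd (snd (wm k w)))) \<noteq> 0"
    using pingpong[OF assms] reg_nonzero[OF h, of s] hw by metis
  then show ?thesis by auto
qed


lemma mobius_0_ne:
  assumes "Factorial_Ring.prime p" "\<not> p dvd b"
  shows "mobius p a b c d 0 \<noteq> 0"
proof -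
  have p1: "p > 1" using assms prime_gt_1_int by blast
  show ?thesis
  proof (cases "[d = 0] (mod p)")
    case True then show ?thesis using p1 by (simp add: mobius_def)
  next
    case False
    have s: "0 \<le> fdiv p b d \<and> fdiv p b d < p \<and> [fdiv p b d * d = b] (mod p)"
      using fdiv_spec[OF assms(1) False] by blast
    have "fdiv p b d \<noteq> 0"
    proof
      assume "fdiv p b d = 0"
      then have "[0 = b] (mod p)" using s by simp
      then show False using assms(2) by (metis cong_0_iff cong_sym)
    qed
    then show ?thesis using False p1 by (simp add: mobius_def)
  qed
qed

lemma moreover_part:
  assumes "h \<in> free_elems k" "h \<noteq> []"
  shows "\<exists>P0. \<forall>p. Factorial_Ring.prime p \<and> p mod 3 = 1 \<and> p \<ge> P0 \<longrightarrow>
              word_eval (Gp p) (gen k p) h \<noteq> \<one>\<^bsub>Gp p\<^esub>"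
proof -
  have hl: "\<forall>l\<in>set h. fst l \<in> {1..k}" "reduced_word h" using assms(1) unfolding free_elems_def by auto
  obtain a b c d where W: "wm k h = (a, b, c, d)" by (cases "wm k h") auto
  have b0: "b \<noteq> 0" using word_b_nonzero[OF hl assms(2)] W by simp
  show ?thesis
  proof (intro exI[of _ "\<bar>b\<bar> + 1"] allI impI)
    fix p :: int assume pp: "Factorial_Ring.prime p \<and> p mod 3 = 1 \<and> p \<ge> \<bar>b\<bar> + 1"
    then have pr: "Factorial_Ring.prime p" by blast
    have nd: "\<not> p dvd b"
    proof
      assume "p dvd b"
      then have "\<bar>p\<bar> \<le> \<bar>b\<bar>" using dvd_imp_le_int b0 by blast
      then show False using pp by linarith
    qed
    have "snd (word_eval (Gp p) (gen k p) h) = mobius p a b c d" using word_eval_snd[OF pr] W by simp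
    then have "snd (word_eval (Gp p) (gen k p) h) 0 \<noteq> 0" using mobius_0_ne[OF pr nd] by simp
    then show "word_eval (Gp p) (gen k p) h \<noteq> \<one>\<^bsub>Gp p\<^esub>" by (auto simp: Gp_one)
  qed
qed


lemma E12_comp:
  assumes "Factorial_Ring.prime p"
  shows "mobius p 1 a 0 1 \<circ> mobius p 1 b 0 1 = mobius p 1 (a + b) 0 1"
  using mobius_comp[OF assms, of 1 1 a 0 1 1 b 0] by (simp add: add.commute)

lemma E21_comp:
  assumes "Factorial_Ring.prime p"
  shows "mobius p 1 0 a 1 \<circ> mobius p 1 0 b 1 = mobius p 1 0 (a + b) 1"
  using mobius_comp[OF assms, of 1 1 0 a 1 1 0 b] by (simp add: add.commute)

lemma cong_dvdI: "p dvd (x - y) \<Longrightarrow> [x = y] (mod p)" for p x y :: int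
  by (simp add: cong_iff_dvd_diff)

lemma decomp:
  fixes p a b c d :: int
  assumes pr: "Factorial_Ring.prime p" and det: "[a * d - b * c = 1] (mod p)" and c: "\<not> [c = 0] (mod p)"
  shows "\<exists>s r. mobius p a b c d = mobius p 1 s 0 1 \<circ> mobius p 1 0 c 1 \<circ> mobius p 1 r 0 1"
proof -
  have cp: "coprime c p" using prime_coprime_int pr c by blast
  obtain ci where ci: "[c * ci = 1] (mod p)" using cong_solve_coprime_int[OF cp] by blast
  have e: "p dvd (c * ci - 1)" using ci by (simp add: cong_iff_dvd_diff)
  have f: "p dvd (a * d - b * c - 1)" using det by (simp add: cong_iff_dvd_diff)
  define s where "s = (a - 1) * ci"
  define r where "r = (d - 1) * ci"
  have "mobius p 1 s 0 1 \<circ> mobius p 1 0 c 1 \<circ> mobius p 1 r 0 1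
        = mobius p 1 s 0 1 \<circ> (mobius p 1 0 c 1 \<circ> mobius p 1 r 0 1)" by (simp add: comp_assoc)
  also have "mobius p 1 0 c 1 \<circ> mobius p 1 r 0 1 = mobius p 1 r c (c * r + 1)"
    using mobius_comp[OF pr, of 1 1 0 c 1 1 r 0] by simp
  also have "mobius p 1 s 0 1 \<circ> mobius p 1 r c (c * r + 1) = mobius p (1 + s * c) (r + s * (c * r + 1)) c (c * r + 1)"
    using mobius_comp[OF pr, of 1 1 s 0 1 "c * r + 1" r c] by (simp add: algebra_simps)
  also have "\<dots> = mobius p a b c d"
  proof (rule mobius_cong[OF pr])
    have "1 + s * c - a = (a - 1) * (c * ci - 1)" unfolding s_def by (simp add: algebra_simps)
    then show "[1 + s * c = a] (mod p)" using e by (intro cong_dvdI) simp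
    have "c * r + 1 - d = (d - 1) * (c * ci - 1)" unfolding r_def by (simp add: algebra_simps)
    then show "[c * r + 1 = d] (mod p)" using e by (intro cong_dvdI) simp
    have "r + s * (c * r + 1) - b = b * (c * ci - 1) + ci * (a * d - b * c - 1) + (a - 1) * ci * (c * ci - 1) * (d - 1)"
      unfolding r_def s_def by (simp add: algebra_simps)
    then show "[r + s * (c * r + 1) = b] (mod p)" using e f by (intro cong_dvdI) simp
  qed simp_all
  finally show ?thesis by metis
qed


abbreviation GK :: "nat \<Rightarrow> int \<Rightarrow> gelem set" where
  "GK k p \<equiv> generate (Gp p) (gen k p ` {1..k})"

lemma inK_comp:
  assumes "((\<lambda>_. 0), g) \<in> GK k p" "((\<lambda>_. 0), h) \<in> GK k p"
  shows "((\<lambda>_. 0), g \<circ> h) \<in> GK k p"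
proof -
  have "((\<lambda>_. 0), g) \<otimes>\<^bsub>Gp p\<^esub> ((\<lambda>_. 0), h) \<in> GK k p" using generate.eng[OF assms] .
  then show ?thesis by (simp add: Gp_mult pact_zero)
qed

lemma inK_id: "((\<lambda>_. 0), id) \<in> GK k p"
  using generate.one[of "Gp p"] by (simp add: Gp_one)

lemma inK_gen:
  assumes "j \<in> {1..k}" "j \<noteq> 3"
  shows "((\<lambda>_. 0), mob p (Mgen k j)) \<in> GK k p"
proof -
  have "gen k p j \<in> GK k p" using assms by (intro generate.incl) auto
  then show ?thesis using assms by (simp add: gen_def)
qed

lemma inK_E12:
  assumes pr: "Factorial_Ring.prime p" and pk: "p > 4 * int k" and k3: "k \<ge> 3"
  shows "((\<lambda>_. 0), mobius p 1 t 0 1) \<in> GK k p"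
proof -
  have g1: "((\<lambda>_. 0), mobius p 1 (4 * int k) 0 1) \<in> GK k p"
    using inK_gen[of 1 k p] k3 by (simp add: Mgen_def)
  have pw: "((\<lambda>_. 0), mobius p 1 (4 * int k * int n) 0 1) \<in> GK k p" for n
  proof (induction n)
    case 0 then show ?case using inK_id[of p k] mobius_id[OF pr] by (simp add: id_def)
  next
    case (Suc n)
    have "((\<lambda>_. 0), mobius p 1 (4 * int k) 0 1 \<circ> mobius p 1 (4 * int k * int n) 0 1) \<in> GK k p"
      using inK_comp[OF g1 Suc] .
    then show ?case using E12_comp[OF pr] by (simp add: algebra_simps)
  qed
  have nz: "\<not> [4 * int k = 0] (mod p)"
  proof
    assume "[4 * int k = 0] (mod p)"
    then have "p dvd 4 * int k" by (simp add: cong_0_iff)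
    moreover have "4 * int k > 0" using k3 by simp
    ultimately have "p \<le> 4 * int k" by (simp add: zdvd_imp_le)
    then show False using pk by simp
  qed
  obtain x where x: "[4 * int k * x = 1] (mod p)"
    using cong_solve_coprime_int[OF prime_coprime_int[OF pr nz]] by blast
  have p0: "p > 0" using pr prime_gt_0_int by blast
  define n where "n = nat ((x * t) mod p)"
  have nn: "int n = (x * t) mod p" unfolding n_def using p0 by simp
  have "[4 * int k * int n = 4 * int k * (x * t)] (mod p)"
    unfolding nn by (intro cong_scalar_left) (simp add: cong_def)
  also have "4 * int k * (x * t) = (4 * int k * x) * t" by simp
  also have "[(4 * int k * x) * t = 1 * t] (mod p)" using x by (intro cong_scalar_right)
  finally have "[4 * int k * int n = t] (mod p)" by simp
  then have "mobius p 1 (4 * int k * int n) 0 1 = mobius p 1 t 0 1"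
    by (intro mobius_cong[OF pr]) auto
  then show ?thesis using pw[of n] by simp
qed

lemma inK_E21:
  assumes pr: "Factorial_Ring.prime p" and pk: "p > 4 * int k" and k3: "k \<ge> 3"
  shows "((\<lambda>_. 0), mobius p 1 0 t 1) \<in> GK k p"
proof -
  have g2: "((\<lambda>_. 0), mobius p 5 (-8) 2 (-3)) \<in> GK k p"
    using inK_gen[of 2 k p] k3 by (simp add: Mgen_def)
  have "mobius p 1 (-2) 0 1 \<circ> mobius p 5 (-8) 2 (-3) \<circ> mobius p 1 2 0 1 = mobius p 1 0 2 1"
  proof -
    have "mobius p 1 (-2) 0 1 \<circ> mobius p 5 (-8) 2 (-3) = mobius p 1 (-2) 2 (-3)"
      using mobius_comp[OF pr, of 1 1 "-2" 0 5 "-3" "-8" 2] by simp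
    moreover have "mobius p 1 (-2) 2 (-3) \<circ> mobius p 1 2 0 1 = mobius p 1 0 2 1"
      using mobius_comp[OF pr, of 1 "-3" "-2" 2 1 1 2 0] by simp
    ultimately show ?thesis by simp
  qed
  moreover have "((\<lambda>_. 0), mobius p 1 (-2) 0 1 \<circ> mobius p 5 (-8) 2 (-3) \<circ> mobius p 1 2 0 1) \<in> GK k p"
    by (intro inK_comp g2 inK_E12[OF pr pk k3])
  ultimately have g: "((\<lambda>_. 0), mobius p 1 0 2 1) \<in> GK k p" by simp
  have pw: "((\<lambda>_. 0), mobius p 1 0 (2 * int n) 1) \<in> GK k p" for n
  proof (induction n)
    case 0 then show ?case using inK_id[of p k] mobius_id[OF pr] by (simp add: id_def)
  next
    case (Suc n)
    have "((\<lambda>_. 0), mobius p 1 0 2 1 \<circ> mobius p 1 0 (2 * int n) 1) \<in> GK k p"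
      using inK_comp[OF g Suc] .
    then show ?case using E21_comp[OF pr] by (simp add: algebra_simps)
  qed
  have p2: "p > 2" using pk k3 by simp
  have nz: "\<not> [2 = 0] (mod p)"
  proof
    assume "[2 = 0] (mod p)"
    then have "p dvd 2" by (simp add: cong_0_iff)
    then have "p \<le> 2" by (simp add: zdvd_imp_le)
    then show False using p2 by simp
  qed
  obtain x where x: "[2 * x = 1] (mod p)"
    using cong_solve_coprime_int[OF prime_coprime_int[OF pr nz]] by blast
  have p0: "p > 0" using pr prime_gt_0_int by blast
  define n where "n = nat ((x * t) mod p)"
  have nn: "int n = (x * t) mod p" unfolding n_def using p0 by simp
  have "[2 * int n = 2 * (x * t)] (mod p)"
    unfolding nn by (intro cong_scalar_left) (simp add: cong_def)
  also have "2 * (x * t) = (2 * x) * t" by simp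
  also have "[(2 * x) * t = 1 * t] (mod p)" using x by (intro cong_scalar_right)
  finally have "[2 * int n = t] (mod p)" by simp
  then have "mobius p 1 0 (2 * int n) 1 = mobius p 1 0 t 1"
    by (intro mobius_cong[OF pr]) auto
  then show ?thesis using pw[of n] by simp
qed

lemma inK_Hp:
  assumes pr: "Factorial_Ring.prime p" and pk: "p > 4 * int k" and k3: "k \<ge> 3" and g: "g \<in> Hp p"
  shows "((\<lambda>_. 0), g) \<in> GK k p"
proof -
  obtain a b c d where gd: "g = mobius p a b c d" "[a * d - b * c = 1] (mod p)"
    using g by (auto simp: Hp_def)
  have main: "((\<lambda>_. 0), mobius p a b c d) \<in> GK k p"
    if det: "[a * d - b * c = 1] (mod p)" and c: "\<not> [c = 0] (mod p)" for a b c d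
  proof -
    obtain s r where "mobius p a b c d = mobius p 1 s 0 1 \<circ> mobius p 1 0 c 1 \<circ> mobius p 1 r 0 1"
      using decomp[OF pr det c] by blast
    moreover have "((\<lambda>_. 0), mobius p 1 s 0 1 \<circ> mobius p 1 0 c 1 \<circ> mobius p 1 r 0 1) \<in> GK k p"
      by (intro inK_comp inK_E12[OF pr pk k3] inK_E21[OF pr pk k3])
    ultimately show ?thesis by simp
  qed
  show ?thesis
  proof (cases "[c = 0] (mod p)")
    case False then show ?thesis using main gd by simp
  next
    case True
    have "[a * d - b * c = a * d - b * 0] (mod p)" by (intro cong_diff cong_refl cong_scalar_left True)
    then have "[a * d - b * 0 = 1] (mod p)" using gd(2) by (meson cong_sym cong_trans)
    then have ad: "[a * d = 1] (mod p)" by simp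
    have an: "\<not> [a = 0] (mod p)"
    proof
      assume "[a = 0] (mod p)"
      then have "[a * d = 0 * d] (mod p)" by (intro cong_scalar_right)
      then have "[1 = 0] (mod p)" using ad by (metis cong_sym cong_trans mult_zero_left)
      then show False using pr prime_gt_1_int by (auto simp: cong_0_iff zdvd_not_zless)
    qed
    have acn: "\<not> [a + c = 0] (mod p)"
    proof
      assume "[a + c = 0] (mod p)"
      then have "[a + c - c = 0 - 0] (mod p)" using True by (intro cong_diff)
      then show False using an by simp
    qed
    have det2: "[a * (b + d) - b * (a + c) = 1] (mod p)"
    proof -
      have "a * (b + d) - b * (a + c) = a * d - b * c" by (simp add: algebra_simps)
      then show ?thesis using gd(2) by simp
    qed
    have m2: "((\<lambda>_. 0), mobius p a b (a + c) (b + d)) \<in> GK k p" using main[OF det2 acn] .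
    have "mobius p 1 0 (-1) 1 \<circ> mobius p a b (a + c) (b + d) = mobius p a b c d"
      using mobius_comp[OF pr, of 1 1 0 "-1" a "b + d" b "a + c"] det2 by simp
    moreover have "((\<lambda>_. 0), mobius p 1 0 (-1) 1 \<circ> mobius p a b (a + c) (b + d)) \<in> GK k p"
      by (intro inK_comp m2 inK_E21[OF pr pk k3])
    ultimately show ?thesis using gd by simp
  qed
qed


definition zt :: "int \<Rightarrow> int \<Rightarrow> int \<Rightarrow> int" where
  "zt p t = (\<lambda>i. if i = p then 1 else if i = t then 2 else 0)"

lemma zt_sum:
  assumes "0 \<le> t" "t < p"
  shows "(\<Sum>i\<in>{0..p}. zt p t i) = 3"
proof -
  have "(\<Sum>i\<in>{0..p}. zt p t i) = (\<Sum>i\<in>{t, p}. zt p t i)"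
    by (rule sum.mono_neutral_right) (use assms in \<open>auto simp: zt_def\<close>)
  also have "\<dots> = 3" using assms by (simp add: zt_def)
  finally show ?thesis .
qed

lemma zt_vals: "zt p t i \<in> {0, 1, 2}" "zt p t i mod 3 = zt p t i"
  by (auto simp: zt_def)

lemma inK_yv:
  assumes pr: "Factorial_Ring.prime p" and pk: "p > 4 * int k" and k3: "k \<ge> 3"
  shows "(yv p, id) \<in> GK k p"
proof -
  have g3: "gen k p 3 \<in> GK k p" using k3 by (intro generate.incl) auto
  have h: "((\<lambda>_. 0), mob p (Minv k 3)) \<in> GK k p"
    using inK_Hp[OF pr pk k3 mob_in_Hp[OF mdet_Minv]] .
  have "gen k p 3 \<otimes>\<^bsub>Gp p\<^esub> ((\<lambda>_. 0), mob p (Minv k 3)) \<in> GK k p" using generate.eng[OF g3 h] .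
  moreover have "gen k p 3 \<otimes>\<^bsub>Gp p\<^esub> ((\<lambda>_. 0), mob p (Minv k 3)) = (yv p, id)"
    using Mgen_Minv2[OF pr, of k 3] Ap_mod_fun[OF yv_Ap[OF pr]] by (simp add: gen_def Gp_mult pact_zero)
  ultimately show ?thesis by simp
qed

lemma inK_zt:
  assumes pr: "Factorial_Ring.prime p" and pk: "p > 4 * int k" and k3: "k \<ge> 3"
    and t: "0 \<le> t" "t < p"
  shows "(zt p t, id) \<in> GK k p"
proof -
  define \<tau> where "\<tau> = mobius p 1 t 0 1"
  define \<tau>' where "\<tau>' = mobius p 1 (-t) 0 1"
  have c1: "\<tau> \<circ> \<tau>' = id" unfolding \<tau>_def \<tau>'_def using E12_comp[OF pr] mobius_id[OF pr] by simp
  have c2: "\<tau>' \<circ> \<tau> = id" unfolding \<tau>_def \<tau>'_def using E12_comp[OF pr] mobius_id[OF pr] by simp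
  have iv: "hinv \<tau> = \<tau>'" using inv_unique_comp[OF c1 c2] .
  have p1: "p > 1" using pr prime_gt_1_int by blast
  have n1: "\<not> [1 = 0] (mod p)" using p1 by (simp add: cong_0_iff zdvd_not_zless)
  have tp: "\<tau> p = p" unfolding \<tau>_def using p1 by (simp add: mobius_def)
  have t0: "\<tau> 0 = t"
  proof -
    have "fdiv p t 1 = t" using fdiv_unique[OF pr n1] t by auto
    then show ?thesis unfolding \<tau>_def using p1 n1 by (simp add: mobius_def)
  qed
  have inv1: "\<tau>' i = v \<longleftrightarrow> i = \<tau> v" for i v
    using c1 c2 by (metis comp_apply id_apply)
  have pz: "pact \<tau> (yv p) = zt p t"
  proof
    fix i
    show "pact \<tau> (yv p) i = zt p t i"
      unfolding pact_def iv yv_def zt_def using inv1[of i p] inv1[of i 0] tp t0 by auto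
  qed
  have a: "((\<lambda>_. 0), \<tau>) \<in> GK k p" "((\<lambda>_. 0), \<tau>') \<in> GK k p"
    unfolding \<tau>_def \<tau>'_def by (intro inK_E12[OF pr pk k3])+
  have "((\<lambda>_. 0), \<tau>) \<otimes>\<^bsub>Gp p\<^esub> (yv p, id) \<otimes>\<^bsub>Gp p\<^esub> ((\<lambda>_. 0), \<tau>') \<in> GK k p"
    by (intro generate.eng a inK_yv[OF pr pk k3])
  moreover have "((\<lambda>_. 0), \<tau>) \<otimes>\<^bsub>Gp p\<^esub> (yv p, id) \<otimes>\<^bsub>Gp p\<^esub> ((\<lambda>_. 0), \<tau>') = (zt p t, id)"
    using c1 by (simp add: Gp_mult pz pact_zero zt_vals)
  ultimately show ?thesis by simp
qed

lemma inK_ztpow: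
  assumes pr: "Factorial_Ring.prime p" and pk: "p > 4 * int k" and k3: "k \<ge> 3"
    and t: "0 \<le> t" "t < p"
  shows "((\<lambda>i. (int m * zt p t i) mod 3), id) \<in> GK k p"
proof (induction m)
  case 0 then show ?case using inK_id[of p k] by (simp add: id_def)
next
  case (Suc m)
  have "((\<lambda>i. (int m * zt p t i) mod 3), id) \<otimes>\<^bsub>Gp p\<^esub> (zt p t, id) \<in> GK k p"
    by (intro generate.eng Suc inK_zt[OF pr pk k3 t])
  moreover have "((\<lambda>i. (int m * zt p t i) mod 3), id) \<otimes>\<^bsub>Gp p\<^esub> (zt p t, id)
      = ((\<lambda>i. (int (Suc m) * zt p t i) mod 3), id)"
    by (simp add: Gp_mult pact_id mod_simps algebra_simps)
  ultimately show ?case by metis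
qed


lemma inK_vec_aux:
  assumes pr: "Factorial_Ring.prime p" and pk: "p > 4 * int k" and k3: "k \<ge> 3"
  shows "int n \<le> p \<Longrightarrow> x \<in> Ap p \<Longrightarrow> (\<forall>i. int n \<le> i \<and> i < p \<longrightarrow> x i = 0) \<Longrightarrow> (x, id) \<in> GK k p"
proof (induction n arbitrary: x)
  case 0
  have p0: "p > 0" using pr prime_gt_0_int by blast
  have xo: "x i = 0" if "i \<noteq> p" for i
  proof (cases "i \<in> {0..p}")
    case True then show ?thesis using 0 that by auto
  next
    case False then show ?thesis using 0 unfolding Ap_def by blast
  qed
  have "(\<Sum>i\<in>{0..p}. x i) = (\<Sum>i\<in>{p}. x i)"
    by (rule sum.mono_neutral_right) (use p0 xo in auto)
  then have "x p mod 3 = 0" using 0 unfolding Ap_def by simp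
  moreover have "x p \<in> {0,1,2}" using 0 p0 unfolding Ap_def by auto
  ultimately have "x p = 0" by auto
  then have "x = (\<lambda>_. 0)" using xo by (metis ext)
  then show ?case using inK_id[of p k] by (simp add: id_def)
next
  case (Suc n)
  define t where "t = int n"
  have t: "0 \<le> t" "t < p" using Suc.prems unfolding t_def by auto
  have xt: "x t \<in> {0,1,2}" using Suc.prems(2) t unfolding Ap_def by auto
  define x' where "x' = (\<lambda>i. (x i + x t * zt p t i) mod 3)"
  have x'A: "x' \<in> Ap p"
  proof (rule Ap_I)
    show "\<And>i. x' i \<in> {0, 1, 2}" unfolding x'_def using mod3_vals by blast
    show "\<And>i. i \<notin> {0..p} \<Longrightarrow> x' i = 0" unfolding x'_def using Suc.prems(2) t
      unfolding Ap_def zt_def by auto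
    have "(\<Sum>i\<in>{0..p}. x' i) mod 3 = (\<Sum>i\<in>{0..p}. x i + x t * zt p t i) mod 3"
      unfolding x'_def by (rule mod_sum_eq)
    also have "\<dots> = ((\<Sum>i\<in>{0..p}. x i) + x t * (\<Sum>i\<in>{0..p}. zt p t i)) mod 3"
      by (simp add: sum.distrib sum_distrib_left)
    also have "\<dots> = ((\<Sum>i\<in>{0..p}. x i) + x t * 3) mod 3" using zt_sum[OF t] by simp
    also have "\<dots> = 0" using Suc.prems(2) unfolding Ap_def by simp
    finally show "(\<Sum>i\<in>{0..p}. x' i) mod 3 = 0" .
  qed
  have x'z: "\<forall>i. int n \<le> i \<and> i < p \<longrightarrow> x' i = 0"
  proof (intro allI impI)
    fix i assume i: "int n \<le> i \<and> i < p"
    show "x' i = 0"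
    proof (cases "i = t")
      case True
      have "x' i = (3 * x t) mod 3" unfolding x'_def True zt_def using t by simp
      then show ?thesis by simp
    next
      case False
      then have "x i = 0" using Suc.prems(3) i unfolding t_def by auto
      moreover have "zt p t i = 0" using False i unfolding zt_def by auto
      ultimately show ?thesis unfolding x'_def by simp
    qed
  qed
  have IH: "(x', id) \<in> GK k p" using Suc.IH[OF _ x'A x'z] Suc.prems(1) by (simp add: id_def)
  define m where "m = nat (2 * x t)"
  have mi: "int m = 2 * x t" unfolding m_def using xt by auto
  have "(x', id) \<otimes>\<^bsub>Gp p\<^esub> ((\<lambda>i. (int m * zt p t i) mod 3), id) \<in> GK k p"
    by (intro generate.eng IH inK_ztpow[OF pr pk k3 t])
  moreover have "(x', id) \<otimes>\<^bsub>Gp p\<^esub> ((\<lambda>i. (int m * zt p t i) mod 3), id) = (x, id)"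
  proof -
    have "(\<lambda>i. (x' i + (int m * zt p t i) mod 3) mod 3) = (\<lambda>i. (x i + 3 * (x t * zt p t i)) mod 3)"
      unfolding x'_def mi by (simp add: mod_simps algebra_simps)
    also have "\<dots> = (\<lambda>i. x i mod 3)" by simp
    also have "\<dots> = x" using Ap_mod_fun[OF Suc.prems(2)] .
    finally show ?thesis by (simp add: Gp_mult pact_id)
  qed
  ultimately show ?case by metis
qed

lemma GK_carrier:
  assumes pr: "Factorial_Ring.prime p" and pk: "p > 4 * int k" and k3: "k \<ge> 3"
  shows "GK k p = carrier (Gp p)"
proof
  interpret G: group "Gp p" using Gp_group[OF pr] .
  show "GK k p \<subseteq> carrier (Gp p)"
    by (rule G.generate_incl) (use gen_carrier[OF pr] in blast)
  show "carrier (Gp p) \<subseteq> GK k p"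
  proof
    fix u assume "u \<in> carrier (Gp p)"
    then obtain x g where u: "u = (x, g)" "x \<in> Ap p" "g \<in> Hp p" by (auto simp: Gp_carrier)
    have p0: "p \<ge> 0" using pr prime_gt_0_int by (simp add: less_imp_le)
    have xK: "(x, id) \<in> GK k p" using inK_vec_aux[OF pr pk k3, of "nat p" x] u(2) p0 by simp
    have "(x, id) \<otimes>\<^bsub>Gp p\<^esub> ((\<lambda>_. 0), g) \<in> GK k p"
      by (intro generate.eng xK inK_Hp[OF pr pk k3 u(3)])
    moreover have "(x, id) \<otimes>\<^bsub>Gp p\<^esub> ((\<lambda>_. 0), g) = u"
      using Ap_mod_fun[OF u(2)] u(1) by (simp add: Gp_mult pact_id pact_zero)
    ultimately show "u \<in> GK k p" by simp
  qed
qed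


lemma Ap_finite: "finite (Ap p)"
proof (rule finite_subset)
  show "Ap p \<subseteq> {f. \<forall>x. (x \<in> {0..p} \<longrightarrow> f x \<in> {0,1,2}) \<and> (x \<notin> {0..p} \<longrightarrow> f x = 0)}"
    unfolding Ap_def by blast
  show "finite {f. \<forall>x. (x \<in> {0..p} \<longrightarrow> f x \<in> {0::int,1,2}) \<and> (x \<notin> {0..p} \<longrightarrow> f x = 0)}"
    by (rule finite_set_of_finite_funs) auto
qed

lemma Hp_finite:
  assumes pr: "Factorial_Ring.prime p"
  shows "finite (Hp p)"
proof (rule finite_subset)
  show "Hp p \<subseteq> (\<lambda>(a, b, c, d). mobius p a b c d) ` ({0..<p} \<times> {0..<p} \<times> {0..<p} \<times> {0..<p})"
  proof
    fix g assume "g \<in> Hp p"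
    then obtain a b c d where g: "g = mobius p a b c d" by (auto simp: Hp_def)
    have p0: "p > 0" using pr prime_gt_0_int by blast
    have "g = mobius p (a mod p) (b mod p) (c mod p) (d mod p)"
      unfolding g by (rule mobius_cong[OF pr]) (auto simp: cong_def)
    moreover have "(a mod p, b mod p, c mod p, d mod p) \<in> {0..<p} \<times> {0..<p} \<times> {0..<p} \<times> {0..<p}"
      using p0 by auto
    ultimately show "g \<in> (\<lambda>(a, b, c, d). mobius p a b c d) ` ({0..<p} \<times> {0..<p} \<times> {0..<p} \<times> {0..<p})"
      by (intro image_eqI[where x = "(a mod p, b mod p, c mod p, d mod p)"]) simp_all
  qed
  show "finite ((\<lambda>(a, b, c, d). mobius p a b c d) ` ({0..<p} \<times> {0..<p} \<times> {0..<p} \<times> {0..<p}))"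
    by simp
qed

definition Sc :: "int \<Rightarrow> int \<Rightarrow> (int \<Rightarrow> int) set" where
  "Sc p c = {x \<in> Ap p. x 0 = c}"

definition vsh :: "int \<Rightarrow> int \<Rightarrow> int" where
  "vsh p = (\<lambda>i. if i = 0 then 1 else if i = p then 2 else 0)"

lemma vsh_Ap:
  assumes "Factorial_Ring.prime p"
  shows "vsh p \<in> Ap p"
proof -
  have p1: "p > 1" using assms prime_gt_1_int by blast
  have "(\<Sum>i\<in>{0..p}. vsh p i) = (\<Sum>i\<in>{0,p}. vsh p i)"
    by (rule sum.mono_neutral_right) (use p1 in \<open>auto simp: vsh_def\<close>)
  also have "\<dots> = 3" using p1 by (simp add: vsh_def)
  finally show ?thesis unfolding Ap_def vsh_def using p1 by (auto simp: less_imp_le)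
qed

lemma Sc_card_le:
  assumes pr: "Factorial_Ring.prime p" and c: "c \<in> {0,1,2}"
  shows "card (Sc p c) \<le> card (Sc p ((c + 1) mod 3))"
proof (rule card_inj_on_le)
  let ?f = "\<lambda>x. (\<lambda>i. (x i + vsh p i) mod 3)"
  have p1: "p > 1" using pr prime_gt_1_int by blast
  show "inj_on ?f (Sc p c)"
  proof
    fix x y assume x: "x \<in> Sc p c" and y: "y \<in> Sc p c" and e: "?f x = ?f y"
    show "x = y"
    proof
      fix i
      have "(x i + vsh p i) mod 3 = (y i + vsh p i) mod 3" using e by meson
      then have "x i mod 3 = y i mod 3"
      proof -
        assume eq: "(x i + vsh p i) mod 3 = (y i + vsh p i) mod 3"
        have "x i mod 3 = ((x i + vsh p i) - vsh p i) mod 3" by simp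
        also have "\<dots> = ((x i + vsh p i) mod 3 - vsh p i) mod 3" by (simp add: mod_diff_left_eq)
        also have "\<dots> = ((y i + vsh p i) mod 3 - vsh p i) mod 3" using eq by simp
        also have "\<dots> = ((y i + vsh p i) - vsh p i) mod 3" by (simp add: mod_diff_left_eq)
        finally show ?thesis by simp
      qed
      then show "x i = y i" using Ap_mod x y unfolding Sc_def by (metis (mono_tags, lifting) mem_Collect_eq)
    qed
  qed
  show "?f ` Sc p c \<subseteq> Sc p ((c + 1) mod 3)"
  proof
    fix z assume "z \<in> ?f ` Sc p c"
    then obtain x where x: "x \<in> Sc p c" "z = ?f x" by blast
    have "z \<in> Ap p" using add_Ap[OF _ vsh_Ap[OF pr], of x] x unfolding Sc_def by auto
    moreover have "z 0 = (c + 1) mod 3" using x p1 unfolding Sc_def vsh_def by auto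
    ultimately show "z \<in> Sc p ((c + 1) mod 3)" unfolding Sc_def by blast
  qed
  show "finite (Sc p ((c + 1) mod 3))" using Ap_finite unfolding Sc_def by auto
qed

lemma Sc_card:
  assumes pr: "Factorial_Ring.prime p"
  shows "card (Ap p) = 3 * card (Sc p 0)"
proof -
  have a: "card (Sc p 0) \<le> card (Sc p 1)" using Sc_card_le[OF pr, of 0] by simp
  have b: "card (Sc p 1) \<le> card (Sc p 2)" using Sc_card_le[OF pr, of 1] by simp
  have c: "card (Sc p 2) \<le> card (Sc p 0)" using Sc_card_le[OF pr, of 2] by simp
  have p0: "p > 0" using pr prime_gt_0_int by blast
  have U: "Ap p = Sc p 0 \<union> Sc p 1 \<union> Sc p 2"
  proof
    show "Ap p \<subseteq> Sc p 0 \<union> Sc p 1 \<union> Sc p 2"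
    proof
      fix x assume x: "x \<in> Ap p"
      then have "x 0 \<in> {0,1,2}" using p0 unfolding Ap_def by simp
      then show "x \<in> Sc p 0 \<union> Sc p 1 \<union> Sc p 2" using x unfolding Sc_def by blast
    qed
    show "Sc p 0 \<union> Sc p 1 \<union> Sc p 2 \<subseteq> Ap p" unfolding Sc_def by blast
  qed
  have f: "finite (Sc p c)" for c using Ap_finite unfolding Sc_def by auto
  have d1: "Sc p 0 \<inter> Sc p 1 = {}" "(Sc p 0 \<union> Sc p 1) \<inter> Sc p 2 = {}" unfolding Sc_def by auto
  have "card (Ap p) = card (Sc p 0 \<union> Sc p 1) + card (Sc p 2)"
    unfolding U by (rule card_Un_disjoint) (use f d1 in auto)
  also have "card (Sc p 0 \<union> Sc p 1) = card (Sc p 0) + card (Sc p 1)"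
    by (rule card_Un_disjoint) (use f d1 in auto)
  finally have "card (Ap p) = card (Sc p 0) + card (Sc p 1) + card (Sc p 2)" .
  then show ?thesis using a b c by simp
qed


lemma transit:
  assumes pr: "Factorial_Ring.prime p" and b: "b \<in> {0..p}"
  shows "\<exists>\<sigma>\<in>Hp p. \<sigma> 0 = b"
proof -
  have p1: "p > 1" using pr prime_gt_1_int by blast
  have n1: "\<not> [1 = 0] (mod p)" using p1 by (simp add: cong_0_iff zdvd_not_zless)
  show ?thesis
  proof (cases "b = p")
    case True
    have "mobius p 0 (-1) 1 0 \<in> Hp p" by (rule mobius_in_Hp) simp
    moreover have "mobius p 0 (-1) 1 0 0 = p" using p1 by (simp add: mobius_def)
    ultimately show ?thesis using True by blast
  next
    case False
    have "mobius p 1 b 0 1 \<in> Hp p" by (rule mobius_in_Hp) simp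
    moreover have "mobius p 1 b 0 1 0 = b"
    proof -
      have "fdiv p b 1 = b" using fdiv_unique[OF pr n1] b False by auto
      then show ?thesis using p1 n1 by (simp add: mobius_def)
    qed
    ultimately show ?thesis by blast
  qed
qed

lemma fiber_le:
  assumes pr: "Factorial_Ring.prime p" and \<sigma>: "\<sigma> \<in> Hp p" "\<sigma> b = c"
  shows "card {g \<in> Hp p. g a = b} \<le> card {g \<in> Hp p. g a = c}"
proof (rule card_inj_on_le)
  have bij: "bij \<sigma>" using Hp_inv[OF pr \<sigma>(1)] by blast
  show "inj_on ((\<circ>) \<sigma>) {g \<in> Hp p. g a = b}"
  proof (rule inj_onI)
    fix g h assume "\<sigma> \<circ> g = \<sigma> \<circ> h"
    then have "hinv \<sigma> \<circ> (\<sigma> \<circ> g) = hinv \<sigma> \<circ> (\<sigma> \<circ> h)" by simp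
    then show "g = h" using Hp_inv(2)[OF pr \<sigma>(1)] by (simp add: comp_assoc[symmetric])
  qed
  show "(\<circ>) \<sigma> ` {g \<in> Hp p. g a = b} \<subseteq> {g \<in> Hp p. g a = c}"
    using Hp_comp[OF pr \<sigma>(1)] \<sigma>(2) by auto
  show "finite {g \<in> Hp p. g a = c}" using Hp_finite[OF pr] by simp
qed

lemma fiber_card:
  assumes pr: "Factorial_Ring.prime p" and a: "a \<in> {0..p}"
  shows "card (Hp p) = nat (p + 1) * card {g \<in> Hp p. g a = 0}"
proof -
  have eq: "card {g \<in> Hp p. g a = b} = card {g \<in> Hp p. g a = 0}" if b: "b \<in> {0..p}" for b
  proof -
    obtain \<sigma> where s: "\<sigma> \<in> Hp p" "\<sigma> 0 = b" using transit[OF pr b] by blast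
    have si: "hinv \<sigma> \<in> Hp p" "hinv \<sigma> b = 0"
      using Hp_inv[OF pr s(1)] s(2) by (auto simp: bij_def inv_f_f)
    show ?thesis using fiber_le[OF pr s, of a] fiber_le[OF pr si, of a] by linarith
  qed
  have U: "Hp p = (\<Union>b\<in>{0..p}. {g \<in> Hp p. g a = b})"
  proof
    show "Hp p \<subseteq> (\<Union>b\<in>{0..p}. {g \<in> Hp p. g a = b})"
    proof
      fix g assume g: "g \<in> Hp p"
      then have "g a \<in> {0..p}" using Hp_range(1)[OF pr g a] by blast
      then show "g \<in> (\<Union>b\<in>{0..p}. {g \<in> Hp p. g a = b})" using g by blast
    qed
  qed blast
  have "card (Hp p) = card (\<Union>b\<in>{0..p}. {g \<in> Hp p. g a = b})" using U by (rule arg_cong)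
  also have "\<dots> = (\<Sum>b\<in>{0..p}. card {g \<in> Hp p. g a = b})"
  proof (rule card_UN_disjoint)
    show "finite {0..p}" by simp
    show "\<forall>i\<in>{0..p}. finite {g \<in> Hp p. g a = i}" using Hp_finite[OF pr] by simp
    show "\<forall>i\<in>{0..p}. \<forall>j\<in>{0..p}. i \<noteq> j \<longrightarrow> {g \<in> Hp p. g a = i} \<inter> {g \<in> Hp p. g a = j} = {}"
      by blast
  qed
  also have "\<dots> = (\<Sum>b\<in>{0..p}. card {g \<in> Hp p. g a = 0})" by (rule sum.cong[OF refl], rule eq)
  also have "\<dots> = nat (p + 1) * card {g \<in> Hp p. g a = 0}" by simp
  finally show ?thesis .
qed


definition Tset :: "int \<Rightarrow> gelem set" where
  "Tset p = {u \<in> carrier (Gp p). fst u 0 = 0}"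

definition Bset :: "int \<Rightarrow> (int \<Rightarrow> int) set" where
  "Bset p = {g \<in> Hp p. g 0 = 0 \<or> g p = 0}"

lemma gen_fst: "fst (gen k p j) i \<noteq> 0 \<Longrightarrow> i = 0 \<or> i = p"
  by (auto simp: gen_def yv_def split: if_splits)

lemma mult_fst0:
  "fst ((x, g) \<otimes>\<^bsub>Gp p\<^esub> s) 0 = (x 0 + fst s (hinv g 0)) mod 3"
  by (cases s) (simp add: Gp_mult pact_def)

lemma bad_in_B:
  assumes pr: "Factorial_Ring.prime p" and g: "g \<in> Hp p" and ne: "fst (gen k p j) (hinv g 0) \<noteq> 0"
  shows "g \<in> Bset p"
proof -
  have gi: "g (hinv g 0) = 0" using Hp_inv(3)[OF pr g] by (metis comp_apply id_apply)
  from gen_fst[OF ne] have "hinv g 0 = 0 \<or> hinv g 0 = p" .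
  then have "g 0 = 0 \<or> g p = 0" using gi by auto
  then show ?thesis using g unfolding Bset_def by blast
qed

lemma bdry_subset:
  assumes pr: "Factorial_Ring.prime p"
  shows "((\<lambda>t. t \<otimes>\<^bsub>Gp p\<^esub> gen k p j) ` Tset p - Tset p) \<union> (Tset p - (\<lambda>t. t \<otimes>\<^bsub>Gp p\<^esub> gen k p j) ` Tset p)
         \<subseteq> (\<lambda>t. t \<otimes>\<^bsub>Gp p\<^esub> gen k p j) ` (Ap p \<times> Bset p)"
proof -
  interpret G: group "Gp p" using Gp_group[OF pr] .
  let ?s = "gen k p j"
  have sc: "?s \<in> carrier (Gp p)" using gen_carrier[OF pr] .
  have part1: "(\<lambda>t. t \<otimes>\<^bsub>Gp p\<^esub> ?s) ` Tset p - Tset p \<subseteq> (\<lambda>t. t \<otimes>\<^bsub>Gp p\<^esub> ?s) ` (Ap p \<times> Bset p)"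
  proof
    fix u assume "u \<in> (\<lambda>t. t \<otimes>\<^bsub>Gp p\<^esub> ?s) ` Tset p - Tset p"
    then obtain x g where t: "(x, g) \<in> Tset p" and u: "u = (x, g) \<otimes>\<^bsub>Gp p\<^esub> ?s" and nu: "u \<notin> Tset p"
      by (metis (no_types, lifting) DiffE imageE prod.exhaust)
    have xg: "x \<in> Ap p" "g \<in> Hp p" "x 0 = 0" using t unfolding Tset_def Gp_carrier by auto
    have uc: "u \<in> carrier (Gp p)" using u G.m_closed sc t unfolding Tset_def by auto
    then have "fst u 0 \<noteq> 0" using nu unfolding Tset_def by blast
    then have "fst ?s (hinv g 0) \<noteq> 0" unfolding u mult_fst0 using xg(3) by auto
    then have "g \<in> Bset p" using bad_in_B[OF pr xg(2)] by blast
    then show "u \<in> (\<lambda>t. t \<otimes>\<^bsub>Gp p\<^esub> ?s) ` (Ap p \<times> Bset p)" using u xg by blast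
  qed
  have part2: "Tset p - (\<lambda>t. t \<otimes>\<^bsub>Gp p\<^esub> ?s) ` Tset p \<subseteq> (\<lambda>t. t \<otimes>\<^bsub>Gp p\<^esub> ?s) ` (Ap p \<times> Bset p)"
  proof
    fix u assume "u \<in> Tset p - (\<lambda>t. t \<otimes>\<^bsub>Gp p\<^esub> ?s) ` Tset p"
    then have uT: "u \<in> Tset p" and nu: "u \<notin> (\<lambda>t. t \<otimes>\<^bsub>Gp p\<^esub> ?s) ` Tset p" by auto
    have uc: "u \<in> carrier (Gp p)" using uT unfolding Tset_def by blast
    define z where "z = u \<otimes>\<^bsub>Gp p\<^esub> inv\<^bsub>Gp p\<^esub> ?s"
    have zc: "z \<in> carrier (Gp p)" unfolding z_def using uc sc by auto
    have zs: "z \<otimes>\<^bsub>Gp p\<^esub> ?s = u" unfolding z_def using uc sc by (simp add: G.m_assoc)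
    have zT: "z \<notin> Tset p" using nu zs by blast
    obtain x g where zxg: "z = (x, g)" by (cases z) auto
    have xg: "x \<in> Ap p" "g \<in> Hp p" using zc unfolding zxg Gp_carrier by auto
    have x0: "x 0 \<noteq> 0" using zT zc unfolding zxg Tset_def by auto
    have u0: "fst u 0 = 0" using uT unfolding Tset_def by blast
    have "fst ?s (hinv g 0) \<noteq> 0"
    proof
      assume h: "fst ?s (hinv g 0) = 0"
      have "fst u 0 = (x 0 + fst ?s (hinv g 0)) mod 3" using zs[symmetric] unfolding zxg
        by (simp only: mult_fst0)
      then have "fst u 0 = x 0" using h Ap_mod[OF xg(1)] by simp
      then show False using u0 x0 by simp
    qed
    then have "g \<in> Bset p" using bad_in_B[OF pr xg(2)] by blast
    then show "u \<in> (\<lambda>t. t \<otimes>\<^bsub>Gp p\<^esub> ?s) ` (Ap p \<times> Bset p)" using zs xg unfolding zxg by blast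
  qed
  show ?thesis using part1 part2 by blast
qed


lemma card_G:
  assumes pr: "Factorial_Ring.prime p"
  shows "card (carrier (Gp p)) = card (Ap p) * card (Hp p)"
  unfolding Gp_carrier by (rule card_cartesian_product)

lemma Hp_card_pos:
  assumes pr: "Factorial_Ring.prime p"
  shows "card (Hp p) > 0"
  using Hp_finite[OF pr] Hp_id[OF pr] card_gt_0_iff by blast

lemma Ap_card_pos: "card (Ap p) > 0"
  using Ap_finite zero_Ap card_gt_0_iff by blast

lemma sqrt_le:
  fixes p :: real
  assumes "p \<ge> 1"
  shows "sqrt p \<le> p + 1"
proof -
  have "sqrt p \<le> p"
  proof -
    have s1: "sqrt p \<ge> 1" using assms by simp
    have "sqrt p * sqrt p = p" using assms by simp
    then show ?thesis using s1 by (metis mult_le_cancel_left1 order.trans less_le_not_le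
          linorder_not_less mult_cancel_right2 order_refl)
  qed
  then show ?thesis by simp
qed

lemma bdry_card:
  assumes pr: "Factorial_Ring.prime p"
  shows "real (card (((\<lambda>t. t \<otimes>\<^bsub>Gp p\<^esub> gen k p j) ` Tset p - Tset p) \<union>
                    (Tset p - (\<lambda>t. t \<otimes>\<^bsub>Gp p\<^esub> gen k p j) ` Tset p)))
         \<le> 2 / sqrt (real_of_int p) * real (card (carrier (Gp p)))"
proof -
  let ?D = "((\<lambda>t. t \<otimes>\<^bsub>Gp p\<^esub> gen k p j) ` Tset p - Tset p) \<union> (Tset p - (\<lambda>t. t \<otimes>\<^bsub>Gp p\<^esub> gen k p j) ` Tset p)"
  have fB: "finite (Bset p)" using Hp_finite[OF pr] unfolding Bset_def by simp
  have fAB: "finite (Ap p \<times> Bset p)" using Ap_finite fB by simp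
  have "card ?D \<le> card ((\<lambda>t. t \<otimes>\<^bsub>Gp p\<^esub> gen k p j) ` (Ap p \<times> Bset p))"
    by (rule card_mono) (use fAB bdry_subset[OF pr] in auto)
  also have "\<dots> \<le> card (Ap p \<times> Bset p)" by (rule card_image_le[OF fAB])
  also have "\<dots> = card (Ap p) * card (Bset p)" by (rule card_cartesian_product)
  finally have c1: "card ?D \<le> card (Ap p) * card (Bset p)" .
  have BU: "Bset p = {g \<in> Hp p. g 0 = 0} \<union> {g \<in> Hp p. g p = 0}" unfolding Bset_def by blast
  have cB: "card (Bset p) \<le> card {g \<in> Hp p. g 0 = 0} + card {g \<in> Hp p. g p = 0}"
    unfolding BU by (rule card_Un_le)
  have p1: "p > 1" using pr prime_gt_1_int by blast
  have f0: "card (Hp p) = nat (p + 1) * card {g \<in> Hp p. g 0 = 0}" using fiber_card[OF pr] p1 by simp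
  have fp: "card (Hp p) = nat (p + 1) * card {g \<in> Hp p. g p = 0}" using fiber_card[OF pr] p1 by simp
  have rp: "real (nat (p + 1)) = real_of_int p + 1" using p1 by simp
  have pp: "real_of_int p + 1 > 0" using p1 by simp
  have r0: "real (card {g \<in> Hp p. g 0 = 0}) = real (card (Hp p)) / (real_of_int p + 1)"
    using f0 rp pp by (simp add: field_simps)
  have rpp: "real (card {g \<in> Hp p. g p = 0}) = real (card (Hp p)) / (real_of_int p + 1)"
    using fp rp pp by (simp add: field_simps)
  have rB: "real (card (Bset p)) \<le> 2 * real (card (Hp p)) / (real_of_int p + 1)"
    using cB r0 rpp by (simp add: of_nat_mono[OF cB] ) 
  have "real (card ?D) \<le> real (card (Ap p)) * real (card (Bset p))"
    using c1 by (metis of_nat_mono of_nat_mult)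
  also have "\<dots> \<le> real (card (Ap p)) * (2 * real (card (Hp p)) / (real_of_int p + 1))"
    by (rule mult_left_mono[OF rB]) simp
  also have "\<dots> = 2 / (real_of_int p + 1) * real (card (carrier (Gp p)))"
    unfolding card_G[OF pr] by simp
  also have "\<dots> \<le> 2 / sqrt (real_of_int p) * real (card (carrier (Gp p)))"
  proof (rule mult_right_mono)
    have sp: "sqrt (real_of_int p) > 0" using p1 by simp
    have "sqrt (real_of_int p) \<le> real_of_int p + 1" using sqrt_le p1 by simp
    then show "2 / (real_of_int p + 1) \<le> 2 / sqrt (real_of_int p)"
      using sp by (simp add: frac_le)
  qed simp
  finally show ?thesis .
qed

lemma density:
  assumes pr: "Factorial_Ring.prime p"
  shows "real (card (Tset p)) / real (card (carrier (Gp p))) = 1 / 3"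
proof -
  have T: "Tset p = Sc p 0 \<times> Hp p" unfolding Tset_def Sc_def Gp_carrier by auto
  have cT: "card (Tset p) = card (Sc p 0) * card (Hp p)" unfolding T by (rule card_cartesian_product)
  have cG: "card (carrier (Gp p)) = 3 * card (Sc p 0) * card (Hp p)"
    using card_G[OF pr] Sc_card[OF pr] by simp
  have pos: "card (Sc p 0) * card (Hp p) > 0"
    using Hp_card_pos[OF pr] Ap_card_pos[of p] Sc_card[OF pr] by simp
  show ?thesis unfolding cT cG using pos by (simp add: field_simps)
qed

theorem lemma3p5:
  fixes k :: nat
  assumes "k \<ge> 3"
  shows "\<exists>C::real. C > 0 \<and>
    (\<exists>(gen :: int \<Rightarrow> nat \<Rightarrow> gelem) (T :: int \<Rightarrow> gelem set).
      (\<exists>P0. \<forall>p. Factorial_Ring.prime p \<and> p mod 3 = 1 \<and> p \<ge> P0 \<longrightarrow>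
          (\<forall>j\<in>{1..k}. gen p j \<in> carrier (Gp p))
        \<and> generate (Gp p) (gen p ` {1..k}) = carrier (Gp p)
        \<and> T p \<subseteq> carrier (Gp p)
        \<and> 1 / 243 \<le> real (card (T p)) / real (card (carrier (Gp p)))
        \<and> real (card (T p)) / real (card (carrier (Gp p))) \<le> 1 / 3
        \<and> (\<forall>j\<in>{1..k}.
             real (card (((\<lambda>t. t \<otimes>\<^bsub>Gp p\<^esub> gen p j) ` T p - T p) \<union>
                         (T p - (\<lambda>t. t \<otimes>\<^bsub>Gp p\<^esub> gen p j) ` T p)))
               \<le> C / sqrt (real_of_int p) * real (card (carrier (Gp p)))))
      \<and> (\<forall>h\<in>free_elems k. h \<noteq> [] \<longrightarrow>
           (\<exists>P0. \<forall>p. Factorial_Ring.prime p \<and> p mod 3 = 1 \<and> p \<ge> P0 \<longrightarrow>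
              word_eval (Gp p) (gen p) h \<noteq> \<one>\<^bsub>Gp p\<^esub>)))"
proof (intro exI[of _ "2::real"] conjI exI[of _ "gen k"] exI[of _ Tset])
  show "(2::real) > 0" by simp
  show "\<exists>P0. \<forall>p. Factorial_Ring.prime p \<and> p mod 3 = 1 \<and> p \<ge> P0 \<longrightarrow>
          (\<forall>j\<in>{1..k}. gen k p j \<in> carrier (Gp p))
        \<and> generate (Gp p) (gen k p ` {1..k}) = carrier (Gp p)
        \<and> Tset p \<subseteq> carrier (Gp p)
        \<and> 1 / 243 \<le> real (card (Tset p)) / real (card (carrier (Gp p)))
        \<and> real (card (Tset p)) / real (card (carrier (Gp p))) \<le> 1 / 3
        \<and> (\<forall>j\<in>{1..k}.
             real (card (((\<lambda>t. t \<otimes>\<^bsub>Gp p\<^esub> gen k p j) ` Tset p - Tset p) \<union>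
                         (Tset p - (\<lambda>t. t \<otimes>\<^bsub>Gp p\<^esub> gen k p j) ` Tset p)))
               \<le> 2 / sqrt (real_of_int p) * real (card (carrier (Gp p))))"
  proof (intro exI[of _ "4 * int k + 1"] allI impI)
    fix p :: int assume h: "Factorial_Ring.prime p \<and> p mod 3 = 1 \<and> p \<ge> 4 * int k + 1"
    then have pr: "Factorial_Ring.prime p" and pk: "p > 4 * int k" by auto
    show "(\<forall>j\<in>{1..k}. gen k p j \<in> carrier (Gp p))
        \<and> generate (Gp p) (gen k p ` {1..k}) = carrier (Gp p)
        \<and> Tset p \<subseteq> carrier (Gp p)
        \<and> 1 / 243 \<le> real (card (Tset p)) / real (card (carrier (Gp p)))
        \<and> real (card (Tset p)) / real (card (carrier (Gp p))) \<le> 1 / 3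
        \<and> (\<forall>j\<in>{1..k}.
             real (card (((\<lambda>t. t \<otimes>\<^bsub>Gp p\<^esub> gen k p j) ` Tset p - Tset p) \<union>
                         (Tset p - (\<lambda>t. t \<otimes>\<^bsub>Gp p\<^esub> gen k p j) ` Tset p)))
               \<le> 2 / sqrt (real_of_int p) * real (card (carrier (Gp p))))"
      using gen_carrier[OF pr] GK_carrier[OF pr pk assms] density[OF pr] bdry_card[OF pr]
      unfolding Tset_def by auto
  qed
  show "\<forall>h\<in>free_elems k. h \<noteq> [] \<longrightarrow>
           (\<exists>P0. \<forall>p. Factorial_Ring.prime p \<and> p mod 3 = 1 \<and> p \<ge> P0 \<longrightarrow>
              word_eval (Gp p) (gen k p) h \<noteq> \<one>\<^bsub>Gp p\<^esub>)"
    using moreover_part by blast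
qed

end
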